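(* Let Assumptions A1–A3 hold. Then for every $\boldsymbol\varphi\in H$ the bilinear form $a_{\boldsymbol\varphi}$ is symmetric, bounded on $H\times H$, and coercive with coercivity constant $1$ with respect to $\|\cdot\|_{\mathrm R}$, i.e. $a_{\boldsymbol\varphi}(\mathbf v,\mathbf v)\ge\|\mathbf v\|_{\mathrm R}^2$ for all $\mathbf v\in H$.
   Context: $\mathcal D\subset\mathbb R^d$, $d\in\{2,3\}$, bounded convex Lipschitz domain; $p\ge1$; $H=[H^1_0(\mathcal D,\mathbb C)]^p$ as a real Hilbert space. Parameters $V_j$, $\Omega_j\in\mathbb R$, $K=[\kappa_{ij}]$. A1: $V_j\in L^\infty(\mathcal D)$, $V_j\ge0$ a.e. A2: for each $j$ there is $\varepsilon_j>0$ with $V_j(x)-\frac{1+\varepsilon_j}{4}\Omega_j^2(x_1^2+x_2^2)\ge0$ a.e. A3: $K$ symmetric with nonnegative entries. $\mathcal L_3=-i(x_1\partial_{x_2}-x_2\partial_{x_1})$, $\rho_j(\boldsymbol\varphi)=\sum_i\kappa_{ij}|\varphi_i|^2$, $a_{\boldsymbol\varphi}(\mathbf v,\mathbf w)=\sum_j\mathrm{Re}\int_{\mathcal D}\nabla v_j\cdot\overline{\nabla w_j}+V_jv_j\overline{w_j}-\Omega_j\overline{w_j}\mathcal L_3v_j+\rho_j(\boldsymbol\varphi)v_j\overline{w_j}\,dx$. With $R(x)=(x_2,-x_1)$ ($d=2$) or $(x_2,-x_1,0)$ ($d=3$), $V^{\mathrm R}_j=V_j-\frac14\Omega_j^2(x_1^2+x_2^2)$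 and $\nabla^{\mathrm R}v_j=\nabla v_j+i\frac{\Omega_j}{2}R\,v_j$, define $(\mathbf v,\mathbf w)_{\mathrm R}=\sum_j\mathrm{Re}\int_{\mathcal D}\nabla^{\mathrm R}v_j\cdot\overline{\nabla^{\mathrm R}w_j}+V_j^{\mathrm R}v_j\overline{w_j}\,dx$ and $\|\mathbf v\|_{\mathrm R}=(\mathbf v,\mathbf v)_{\mathrm R}^{1/2}$ (a norm equivalent to the $H$-norm). *)

theory Defs
  imports "HOL-Analysis.Analysis"
begin

definition dderiv :: "'a::euclidean_space \<Rightarrow> ('a \<Rightarrow> complex) \<Rightarrow> 'a \<Rightarrow> complex" where
  "dderiv b f = (\<lambda>x. frechet_derivative f (at x) b)"

definition smooth_fun :: "('a::euclidean_space \<Rightarrow> complex) \<Rightarrow> bool" where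
  "smooth_fun f \<longleftrightarrow> (\<forall>bs. set bs \<subseteq> Basis \<longrightarrow> (\<forall>x. fold dderiv bs f differentiable (at x)))"

definition test_fun :: "'a::euclidean_space set \<Rightarrow> ('a \<Rightarrow> complex) \<Rightarrow> bool" where
  "test_fun D \<phi> \<longleftrightarrow> smooth_fun \<phi> \<and> compact (closure {x. \<phi> x \<noteq> 0}) \<and> closure {x. \<phi> x \<noteq> 0} \<subseteq> D"

definition L2 :: "'a::euclidean_space set \<Rightarrow> ('a \<Rightarrow> complex) \<Rightarrow> bool" where
  "L2 D u \<longleftrightarrow> u \<in> borel_measurable (lebesgue_on D) \<and> integrable (lebesgue_on D) (\<lambda>x. (cmod (u x))\<^sup>2)"

definition L2_dist2 :: "'a::euclidean_space set \<Rightarrow> ('a \<Rightarrow> complex) \<Rightarrow> ('a \<Rightarrow> complex) \<Rightarrow> real" where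
  "L2_dist2 D u w = (LINT x|lebesgue_on D. (cmod (u x - w x))\<^sup>2)"

definition weak_partial :: "'a::euclidean_space set \<Rightarrow> ('a \<Rightarrow> complex) \<Rightarrow> 'a \<Rightarrow> ('a \<Rightarrow> complex) \<Rightarrow> bool" where
  "weak_partial D u b g \<longleftrightarrow>
     (\<forall>\<phi>. test_fun D \<phi> \<longrightarrow>
        (LINT x|lebesgue_on D. u x * dderiv b \<phi> x) = - (LINT x|lebesgue_on D. g x * \<phi> x))"

definition wpd :: "'a::euclidean_space set \<Rightarrow> 'a \<Rightarrow> ('a \<Rightarrow> complex) \<Rightarrow> 'a \<Rightarrow> complex" where
  "wpd D b u = (SOME g. L2 D g \<and> weak_partial D u b g)"

text \<open>H^1_0(D,C): closure of C_c^infinity(D) in the H^1 norm.\<close>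
definition H10 :: "'a::euclidean_space set \<Rightarrow> ('a \<Rightarrow> complex) \<Rightarrow> bool" where
  "H10 D u \<longleftrightarrow> L2 D u \<and> (\<forall>b\<in>Basis. \<exists>g. L2 D g \<and> weak_partial D u b g) \<and>
     (\<exists>\<phi>s::nat \<Rightarrow> 'a \<Rightarrow> complex. (\<forall>n. test_fun D (\<phi>s n)) \<and>
        (\<lambda>n. L2_dist2 D (\<phi>s n) u) \<longlonglongrightarrow> 0 \<and>
        (\<forall>b\<in>Basis. (\<lambda>n. L2_dist2 D (dderiv b (\<phi>s n)) (wpd D b u)) \<longlonglongrightarrow> 0))"

text \<open>H = [H^1_0(D,C)]^p, vectors indexed by j < p.\<close>
definition inH :: "'a::euclidean_space set \<Rightarrow> nat \<Rightarrow> (nat \<Rightarrow> 'a \<Rightarrow> complex) \<Rightarrow> bool" where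
  "inH D p v \<longleftrightarrow> (\<forall>j<p. H10 D (v j))"

definition H_norm2 :: "'a::euclidean_space set \<Rightarrow> nat \<Rightarrow> (nat \<Rightarrow> 'a \<Rightarrow> complex) \<Rightarrow> real" where
  "H_norm2 D p v = (\<Sum>j<p. LINT x|lebesgue_on D.
       (cmod (v j x))\<^sup>2 + (\<Sum>b\<in>Basis. (cmod (wpd D b (v j) x))\<^sup>2))"

definition L3 :: "'a::euclidean_space set \<Rightarrow> 'a \<Rightarrow> 'a \<Rightarrow> ('a \<Rightarrow> complex) \<Rightarrow> 'a \<Rightarrow> complex" where
  "L3 D e1 e2 v = (\<lambda>x. - \<i> * (of_real (x \<bullet> e1) * wpd D e2 v x - of_real (x \<bullet> e2) * wpd D e1 v x))"

definition rho :: "nat \<Rightarrow> (nat \<Rightarrow> nat \<Rightarrow> real) \<Rightarrow> nat \<Rightarrow> (nat \<Rightarrow> 'a \<Rightarrow> complex) \<Rightarrow> 'a \<Rightarrow> real" where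
  "rho p K j \<phi> = (\<lambda>x. \<Sum>i<p. K i j * (cmod (\<phi> i x))\<^sup>2)"

definition a_integrand ::
  "'a::euclidean_space set \<Rightarrow> 'a \<Rightarrow> 'a \<Rightarrow> nat \<Rightarrow> (nat \<Rightarrow> 'a \<Rightarrow> real) \<Rightarrow> (nat \<Rightarrow> real) \<Rightarrow>
   (nat \<Rightarrow> nat \<Rightarrow> real) \<Rightarrow> (nat \<Rightarrow> 'a \<Rightarrow> complex) \<Rightarrow> nat \<Rightarrow>
   (nat \<Rightarrow> 'a \<Rightarrow> complex) \<Rightarrow> (nat \<Rightarrow> 'a \<Rightarrow> complex) \<Rightarrow> 'a \<Rightarrow> complex" where
  "a_integrand D e1 e2 p V \<Omega> K \<phi> j v w = (\<lambda>x.
      (\<Sum>b\<in>Basis. wpd D b (v j) x * cnj (wpd D b (w j) x))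
      + of_real (V j x) * v j x * cnj (w j x)
      - of_real (\<Omega> j) * cnj (w j x) * L3 D e1 e2 (v j) x
      + of_real (rho p K j \<phi> x) * v j x * cnj (w j x))"

definition a_form ::
  "'a::euclidean_space set \<Rightarrow> 'a \<Rightarrow> 'a \<Rightarrow> nat \<Rightarrow> (nat \<Rightarrow> 'a \<Rightarrow> real) \<Rightarrow> (nat \<Rightarrow> real) \<Rightarrow>
   (nat \<Rightarrow> nat \<Rightarrow> real) \<Rightarrow> (nat \<Rightarrow> 'a \<Rightarrow> complex) \<Rightarrow>
   (nat \<Rightarrow> 'a \<Rightarrow> complex) \<Rightarrow> (nat \<Rightarrow> 'a \<Rightarrow> complex) \<Rightarrow> real" where
  "a_form D e1 e2 p V \<Omega> K \<phi> v w =
     (\<Sum>j<p. Re (LINT x|lebesgue_on D. a_integrand D e1 e2 p V \<Omega> K \<phi> j v w x))"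

definition Rvec :: "'a::euclidean_space \<Rightarrow> 'a \<Rightarrow> 'a \<Rightarrow> 'a" where
  "Rvec e1 e2 x = (x \<bullet> e2) *\<^sub>R e1 - (x \<bullet> e1) *\<^sub>R e2"

definition VR :: "'a::euclidean_space \<Rightarrow> 'a \<Rightarrow> (nat \<Rightarrow> 'a \<Rightarrow> real) \<Rightarrow> (nat \<Rightarrow> real) \<Rightarrow> nat \<Rightarrow> 'a \<Rightarrow> real" where
  "VR e1 e2 V \<Omega> j x = V j x - (\<Omega> j)\<^sup>2 / 4 * ((x \<bullet> e1)\<^sup>2 + (x \<bullet> e2)\<^sup>2)"

definition gradR :: "'a::euclidean_space set \<Rightarrow> 'a \<Rightarrow> 'a \<Rightarrow> real \<Rightarrow> ('a \<Rightarrow> complex) \<Rightarrow> 'a \<Rightarrow> 'a \<Rightarrow> complex" where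
  "gradR D e1 e2 \<omega> u b = (\<lambda>x. wpd D b u x + \<i> * of_real (\<omega> / 2) * of_real (Rvec e1 e2 x \<bullet> b) * u x)"

definition R_inner ::
  "'a::euclidean_space set \<Rightarrow> 'a \<Rightarrow> 'a \<Rightarrow> nat \<Rightarrow> (nat \<Rightarrow> 'a \<Rightarrow> real) \<Rightarrow> (nat \<Rightarrow> real) \<Rightarrow>
   (nat \<Rightarrow> 'a \<Rightarrow> complex) \<Rightarrow> (nat \<Rightarrow> 'a \<Rightarrow> complex) \<Rightarrow> real" where
  "R_inner D e1 e2 p V \<Omega> v w = (\<Sum>j<p. Re (LINT x|lebesgue_on D.
      (\<Sum>b\<in>Basis. gradR D e1 e2 (\<Omega> j) (v j) b x * cnj (gradR D e1 e2 (\<Omega> j) (w j) b x))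
      + of_real (VR e1 e2 V \<Omega> j x) * v j x * cnj (w j x)))"

definition R_norm ::
  "'a::euclidean_space set \<Rightarrow> 'a \<Rightarrow> 'a \<Rightarrow> nat \<Rightarrow> (nat \<Rightarrow> 'a \<Rightarrow> real) \<Rightarrow> (nat \<Rightarrow> real) \<Rightarrow>
   (nat \<Rightarrow> 'a \<Rightarrow> complex) \<Rightarrow> real" where
  "R_norm D e1 e2 p V \<Omega> v = sqrt (R_inner D e1 e2 p V \<Omega> v v)"

end

theory Submission
  imports Defs
begin

lemma meas2: "F \<in> borel_measurable borel \<Longrightarrow> F \<in> borel_measurable (lborel \<Otimes>\<^sub>M lborel)"
  by (simp add: lborel_prod measurable_lborel1)

lemma T_str:
  fixes F :: "real\<times>real\<times>real \<Rightarrow> ennreal"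
  assumes [measurable]: "F \<in> borel_measurable borel"
  shows "(\<integral>\<^sup>+x. F x \<partial>lborel) = (\<integral>\<^sup>+s. \<integral>\<^sup>+t. \<integral>\<^sup>+r. F (s,t,r) \<partial>lborel \<partial>lborel \<partial>lborel)"
proof -
  have m: "F \<in> borel_measurable (lborel \<Otimes>\<^sub>M lborel)" using meas2 assms by blast
  have "(\<integral>\<^sup>+x. F x \<partial>lborel) = (\<integral>\<^sup>+s. \<integral>\<^sup>+y. F (s,y) \<partial>lborel \<partial>lborel)"
    by (subst lborel_prod[symmetric]) (rule lborel.nn_integral_fst[symmetric, OF m])
  also have "\<dots> = (\<integral>\<^sup>+s. \<integral>\<^sup>+t. \<integral>\<^sup>+r. F (s,t,r) \<partial>lborel \<partial>lborel \<partial>lborel)"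
  proof (rule nn_integral_cong)
    fix s :: real
    have mm: "(\<lambda>y. F (s,y)) \<in> borel_measurable (lborel \<Otimes>\<^sub>M lborel)"
      by (rule meas2) simp
    show "(\<integral>\<^sup>+y. F (s,y) \<partial>lborel) = (\<integral>\<^sup>+t. \<integral>\<^sup>+r. F (s,t,r) \<partial>lborel \<partial>lborel)"
      by (subst lborel_prod[symmetric]) (rule lborel.nn_integral_fst[symmetric, OF mm])
  qed
  finally show ?thesis .
qed

lemma T_swap:
  fixes F :: "real\<times>real \<Rightarrow> ennreal"
  assumes [measurable]: "F \<in> borel_measurable borel"
  shows "(\<integral>\<^sup>+s. \<integral>\<^sup>+t. F (s,t) \<partial>lborel \<partial>lborel) = (\<integral>\<^sup>+t. \<integral>\<^sup>+s. F (s,t) \<partial>lborel \<partial>lborel)"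
  using meas2[OF assms] by (simp add: lborel_pair.Fubini)

lemma T_rst:
  fixes F :: "real\<times>real\<times>real \<Rightarrow> ennreal"
  assumes [measurable]: "F \<in> borel_measurable borel"
  shows "(\<integral>\<^sup>+x. F x \<partial>lborel) = (\<integral>\<^sup>+r. \<integral>\<^sup>+s. \<integral>\<^sup>+t. F (s,t,r) \<partial>lborel \<partial>lborel \<partial>lborel)"
proof -
  have m: "F \<in> borel_measurable (lborel \<Otimes>\<^sub>M lborel)" using meas2 assms by blast
  have "(\<integral>\<^sup>+x. F x \<partial>lborel) = (\<integral>\<^sup>+y. \<integral>\<^sup>+s. F (s,y) \<partial>lborel \<partial>lborel)"
    by (subst lborel_prod[symmetric]) (rule lborel_pair.nn_integral_snd[symmetric, OF m])
  also have "\<dots> = (\<integral>\<^sup>+r. \<integral>\<^sup>+t. \<integral>\<^sup>+s. F (s,t,r) \<partial>lborel \<partial>lborel \<partial>lborel)"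
  proof -
    have mm: "(\<lambda>y. \<integral>\<^sup>+s. F (s,y) \<partial>lborel) \<in> borel_measurable (lborel \<Otimes>\<^sub>M lborel)"
      by (rule meas2) simp
    show ?thesis
      by (subst lborel_prod[symmetric]) (rule lborel_pair.nn_integral_snd[symmetric, OF mm])
  qed
  also have "\<dots> = (\<integral>\<^sup>+r. \<integral>\<^sup>+s. \<integral>\<^sup>+t. F (s,t,r) \<partial>lborel \<partial>lborel \<partial>lborel)"
  proof (rule nn_integral_cong)
    fix r :: real
    show "(\<integral>\<^sup>+t. \<integral>\<^sup>+s. F (s,t,r) \<partial>lborel \<partial>lborel) = (\<integral>\<^sup>+s. \<integral>\<^sup>+t. F (s,t,r) \<partial>lborel \<partial>lborel)"
    proof -
      have c: "(\<lambda>(s,t). (s,t,r)::real\<times>real\<times>real) \<in> borel_measurable borel"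
        by (rule borel_measurable_continuous_onI) (auto simp: case_prod_beta intro!: continuous_intros)
      have "(\<lambda>(s,t). F (s,t,r)) \<in> borel_measurable borel"
        using measurable_compose[OF c assms] by (simp add: case_prod_beta comp_def)
      then show ?thesis using T_swap[of "\<lambda>(s,t). F (s,t,r)"] by simp
    qed
  qed
  finally show ?thesis .
qed

lemma real_amgm_aux:
  fixes x1 x2 p q1 q2 :: real
  assumes "0 \<le> x1" "0 \<le> x2" "0 \<le> p" "0 \<le> q1" "0 \<le> q2" "x1^2 \<le> p*q1" "x2^2 \<le> p*q2"
  shows "2*x1*x2 \<le> p*(q1+q2)"
proof -
  have a: "x1^2 * x2^2 \<le> (p*q1) * (p*q2)" using assms by (intro mult_mono) auto
  have b: "4*q1*q2 \<le> (q1+q2)^2"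
  proof -
    have "0 \<le> (q1-q2)^2" by simp
    then show ?thesis by (simp add: power2_eq_square algebra_simps)
  qed
  have "(2*x1*x2)^2 = 4 * (x1^2 * x2^2)" by (simp add: power2_eq_square)
  also have "\<dots> \<le> 4 * ((p*q1) * (p*q2))" using a by simp
  also have "\<dots> = p^2 * (4*q1*q2)" by (simp add: power2_eq_square)
  also have "\<dots> \<le> p^2 * (q1+q2)^2" using b by (intro mult_left_mono) auto
  also have "\<dots> = (p*(q1+q2))^2" by (simp add: power_mult_distrib)
  finally have "(2*x1*x2)^2 \<le> (p*(q1+q2))^2" .
  moreover have "0 \<le> p*(q1+q2)" using assms by simp
  ultimately show ?thesis by (rule power2_le_imp_le)
qed

lemma ennreal_amgm_aux:
  fixes x1 x2 p q1 q2 :: ennreal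
  assumes "x1^2 \<le> p*q1" "x2^2 \<le> p*q2"
  shows "2*x1*x2 \<le> p*(q1+q2)"
proof (cases "p = 0")
  case True
  then have "x1 = 0" using assms by (simp add: power2_eq_square)
  then show ?thesis by simp
next
  case pnz: False
  show ?thesis
  proof (cases "p = \<infinity> \<or> q1 = \<infinity> \<or> q2 = \<infinity>")
    case True
    show ?thesis
    proof (cases "q1 + q2 = 0")
      case True
      then have "q1 = 0" "q2 = 0" by auto
      then have "x1 = 0" using assms by (simp add: power2_eq_square)
      then show ?thesis by simp
    next
      case False
      then have "p*(q1+q2) = \<infinity>" using True pnz by (auto simp: ennreal_mult_eq_top_iff)
      then show ?thesis by simp
    qed
  next
    case False
    obtain P where P: "p = ennreal P" "0\<le>P" using False ennreal_cases[of p] by auto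
    obtain Q1 where Q1: "q1 = ennreal Q1" "0\<le>Q1" using False ennreal_cases[of q1] by auto
    obtain Q2 where Q2: "q2 = ennreal Q2" "0\<le>Q2" using False ennreal_cases[of q2] by auto
    have "p*q1 < \<infinity>" "p*q2 < \<infinity>" using P Q1 Q2 by (simp_all add: ennreal_mult[symmetric])
    have "x1^2 < \<infinity>" using assms(1) \<open>p*q1 < \<infinity>\<close> by (rule le_less_trans)
    then have "x1 \<noteq> \<infinity>" using power_eq_top_ennreal_iff[of x1 2] by auto
    then obtain X1 where X1: "x1 = ennreal X1" "0 \<le> X1" using ennreal_cases[of x1] by auto
    have "x2^2 < \<infinity>" using assms(2) \<open>p*q2 < \<infinity>\<close> by (rule le_less_trans)
    then have "x2 \<noteq> \<infinity>" using power_eq_top_ennreal_iff[of x2 2] by auto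
    then obtain X2 where X2: "x2 = ennreal X2" "0 \<le> X2" using ennreal_cases[of x2] by auto
    have h1: "X1^2 \<le> P*Q1" using assms(1) P Q1 X1 
      by (simp add: ennreal_power ennreal_mult[symmetric] ennreal_le_iff)
    have h2: "X2^2 \<le> P*Q2" using assms(2) P Q2 X2
      by (simp add: ennreal_power ennreal_mult[symmetric] ennreal_le_iff)
    have "2*X1*X2 \<le> P*(Q1+Q2)" using real_amgm_aux[OF X1(2) X2(2) P(2) Q1(2) Q2(2) h1 h2] .
    then have "ennreal (2*X1*X2) \<le> ennreal (P*(Q1+Q2))" by (rule ennreal_leI)
    moreover have "ennreal (2*X1*X2) = 2*x1*x2" using X1 X2 by (simp add: ennreal_mult)
    moreover have "ennreal (P*(Q1+Q2)) = p*(q1+q2)" using P Q1 Q2 by (simp add: ennreal_mult ennreal_plus)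
    ultimately show ?thesis by simp
  qed
qed

lemma meas_cont_comp:
  fixes F :: "'a::euclidean_space \<Rightarrow> ennreal" and g :: "'b::euclidean_space \<Rightarrow> 'a"
  assumes "F \<in> borel_measurable borel" "continuous_on UNIV g"
  shows "(\<lambda>x. F (g x)) \<in> borel_measurable borel"
proof -
  have "g \<in> borel_measurable borel" using assms(2) by (rule borel_measurable_continuous_onI)
  then show ?thesis using measurable_compose[OF _ assms(1)] by blast
qed

lemma slice_pair_integral:
  fixes F :: "real\<times>real\<times>real \<Rightarrow> ennreal"
  assumes [measurable]: "F \<in> borel_measurable borel"
  shows "(\<integral>\<^sup>+s. \<integral>\<^sup>+t. F (s,t,r) \<partial>lborel \<partial>lborel) = (\<integral>\<^sup>+p. F (fst p, snd p, r) \<partial>(lborel \<Otimes>\<^sub>M lborel))"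
proof -
  have "(\<lambda>p. F (fst p, snd p, r)) \<in> borel_measurable borel"
    by (rule meas_cont_comp[OF assms]) (auto intro!: continuous_intros)
  then have m: "(\<lambda>p. F (fst p, snd p, r)) \<in> borel_measurable (lborel \<Otimes>\<^sub>M lborel)" by (rule meas2)
  show ?thesis using lborel.nn_integral_fst[OF m] by simp
qed

lemma core3:
  fixes U D1 D2 D3 :: "real\<times>real\<times>real \<Rightarrow> ennreal"
  assumes mU[measurable]: "U \<in> borel_measurable borel"
    and mD1[measurable]: "D1 \<in> borel_measurable borel"
    and mD2[measurable]: "D2 \<in> borel_measurable borel"
    and mD3[measurable]: "D3 \<in> borel_measurable borel"
    and H1: "\<And>s t r. U(s,t,r)^2 \<le> (\<integral>\<^sup>+s'. 2 * U(s',t,r) * D1(s',t,r) \<partial>lborel)"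
    and H2: "\<And>s t r. U(s,t,r)^2 \<le> (\<integral>\<^sup>+t'. 2 * U(s,t',r) * D2(s,t',r) \<partial>lborel)"
    and H3: "\<And>s t r. U(s,t,r)^2 \<le> (\<integral>\<^sup>+r'. 2 * U(s,t,r') * D3(s,t,r') \<partial>lborel)"
  shows "(\<integral>\<^sup>+x. U x ^ 4 \<partial>lborel) \<le> 2 * (\<integral>\<^sup>+x. U x^2 + D1 x^2 + D2 x^2 + D3 x^2 \<partial>lborel)^2"
proof -
  define N where "N = (\<integral>\<^sup>+x. U x^2 + D1 x^2 + D2 x^2 + D3 x^2 \<partial>lborel)"
  define P where "P r = (\<integral>\<^sup>+s. \<integral>\<^sup>+t. U(s,t,r)^2 \<partial>lborel \<partial>lborel)" for r
  define Q1 where "Q1 r = (\<integral>\<^sup>+s. \<integral>\<^sup>+t. D1(s,t,r)^2 \<partial>lborel \<partial>lborel)" for r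
  define Q2 where "Q2 r = (\<integral>\<^sup>+s. \<integral>\<^sup>+t. D2(s,t,r)^2 \<partial>lborel \<partial>lborel)" for r
  define X1 where "X1 r = (\<integral>\<^sup>+s. \<integral>\<^sup>+t. U(s,t,r) * D1(s,t,r) \<partial>lborel \<partial>lborel)" for r
  define X2 where "X2 r = (\<integral>\<^sup>+s. \<integral>\<^sup>+t. U(s,t,r) * D2(s,t,r) \<partial>lborel \<partial>lborel)" for r
  have PN: "P r \<le> N" for r
  proof -
    have "P r \<le> (\<integral>\<^sup>+s. \<integral>\<^sup>+t. \<integral>\<^sup>+r'. 2 * U(s,t,r') * D3(s,t,r') \<partial>lborel \<partial>lborel \<partial>lborel)"
      unfolding P_def by (intro nn_integral_mono H3)
    also have "\<dots> = (\<integral>\<^sup>+x. 2 * U x * D3 x \<partial>lborel)"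
      by (rule T_str[symmetric]) measurable
    also have "\<dots> \<le> N" unfolding N_def
    proof (intro nn_integral_mono)
      fix x
      have "2 * U x * D3 x \<le> U x^2 + D3 x^2" by (rule sum_of_squares_ge_ennreal)
      also have "\<dots> \<le> U x^2 + D1 x^2 + D2 x^2 + D3 x^2" by (simp add: add_increasing add_mono)
      finally show "2 * U x * D3 x \<le> U x^2 + D1 x^2 + D2 x^2 + D3 x^2" .
    qed
    finally show ?thesis .
  qed
  have CS: "(\<integral>\<^sup>+s. \<integral>\<^sup>+t. U(s,t,r) * D(s,t,r) \<partial>lborel \<partial>lborel)^2 \<le> P r * (\<integral>\<^sup>+s. \<integral>\<^sup>+t. D(s,t,r)^2 \<partial>lborel \<partial>lborel)"
    if mD[measurable]: "D \<in> borel_measurable borel" for r and D :: "real\<times>real\<times>real \<Rightarrow> ennreal"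
  proof -
    have m1: "(\<lambda>p. U (fst p, snd p, r)) \<in> borel_measurable (lborel \<Otimes>\<^sub>M lborel)"
      by (rule meas2, rule meas_cont_comp[OF mU]) (auto intro!: continuous_intros)
    have m2: "(\<lambda>p. D (fst p, snd p, r)) \<in> borel_measurable (lborel \<Otimes>\<^sub>M lborel)"
      by (rule meas2, rule meas_cont_comp[OF mD]) (auto intro!: continuous_intros)
    have "(\<integral>\<^sup>+s. \<integral>\<^sup>+t. U(s,t,r) * D(s,t,r) \<partial>lborel \<partial>lborel) = (\<integral>\<^sup>+p. U (fst p, snd p, r) * D (fst p, snd p, r) \<partial>(lborel \<Otimes>\<^sub>M lborel))"
      using slice_pair_integral[of "\<lambda>x. U x * D x" r] by simp
    moreover have "P r = (\<integral>\<^sup>+p. U (fst p, snd p, r)^2 \<partial>(lborel \<Otimes>\<^sub>M lborel))"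
      unfolding P_def using slice_pair_integral[of "\<lambda>x. U x ^2" r] by simp
    moreover have "(\<integral>\<^sup>+s. \<integral>\<^sup>+t. D(s,t,r)^2 \<partial>lborel \<partial>lborel) = (\<integral>\<^sup>+p. D (fst p, snd p, r)^2 \<partial>(lborel \<Otimes>\<^sub>M lborel))"
      using slice_pair_integral[of "\<lambda>x. D x ^2" r] by simp
    ultimately show ?thesis using Cauchy_Schwarz_nn_integral[OF m1 m2] by simp
  qed
  have slice: "(\<integral>\<^sup>+s. \<integral>\<^sup>+t. U(s,t,r)^4 \<partial>lborel \<partial>lborel) \<le> 2 * (P r * (Q1 r + Q2 r))" for r
  proof -
    define A1 where "A1 t = (\<integral>\<^sup>+s'. 2 * U(s',t,r) * D1(s',t,r) \<partial>lborel)" for t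
    define A2 where "A2 s = (\<integral>\<^sup>+t'. 2 * U(s,t',r) * D2(s,t',r) \<partial>lborel)" for s
    have [measurable]: "A1 \<in> borel_measurable lborel" unfolding A1_def by measurable
    have [measurable]: "A2 \<in> borel_measurable lborel" unfolding A2_def by measurable
    have "(\<integral>\<^sup>+s. \<integral>\<^sup>+t. U(s,t,r)^4 \<partial>lborel \<partial>lborel) \<le> (\<integral>\<^sup>+s. \<integral>\<^sup>+t. A2 s * A1 t \<partial>lborel \<partial>lborel)"
    proof (intro nn_integral_mono)
      fix s t
      have "U(s,t,r)^4 = U(s,t,r)^2 * U(s,t,r)^2" by (simp add: power_add[symmetric])
      also have "\<dots> \<le> A2 s * A1 t" unfolding A1_def A2_def by (intro mult_mono H1 H2) auto
      finally show "U(s,t,r)^4 \<le> A2 s * A1 t" .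
    qed
    also have "\<dots> = (\<integral>\<^sup>+s. A2 s * (\<integral>\<^sup>+t. A1 t \<partial>lborel) \<partial>lborel)"
      by (simp add: nn_integral_cmult)
    also have "\<dots> = (\<integral>\<^sup>+s. A2 s \<partial>lborel) * (\<integral>\<^sup>+t. A1 t \<partial>lborel)"
      by (simp add: nn_integral_multc)
    also have "(\<integral>\<^sup>+t. A1 t \<partial>lborel) = 2 * X1 r"
    proof -
      have "(\<integral>\<^sup>+t. A1 t \<partial>lborel) = (\<integral>\<^sup>+t. 2 * (\<integral>\<^sup>+s'. U(s',t,r) * D1(s',t,r) \<partial>lborel) \<partial>lborel)"
        unfolding A1_def by (intro nn_integral_cong) (simp add: nn_integral_cmult mult.assoc)
      also have "\<dots> = 2 * (\<integral>\<^sup>+t. \<integral>\<^sup>+s'. U(s',t,r) * D1(s',t,r) \<partial>lborel \<partial>lborel)"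
        by (simp add: nn_integral_cmult)
      also have "(\<integral>\<^sup>+t. \<integral>\<^sup>+s'. U(s',t,r) * D1(s',t,r) \<partial>lborel \<partial>lborel) = X1 r"
      proof -
        have "(\<lambda>(s,t). U(s,t,r) * D1(s,t,r)) \<in> borel_measurable borel"
        proof -
          have c: "continuous_on UNIV (\<lambda>p::real\<times>real. (fst p, snd p, r))" by (intro continuous_intros)
          have "(\<lambda>x. U x * D1 x) \<in> borel_measurable borel" by measurable
          from meas_cont_comp[OF this c] show ?thesis by (simp add: case_prod_beta)
        qed
        from T_swap[OF this] show ?thesis unfolding X1_def by simp
      qed
      finally show ?thesis .
    qed
    also have "(\<integral>\<^sup>+s. A2 s \<partial>lborel) = 2 * X2 r"
    proof -
      have "(\<integral>\<^sup>+s. A2 s \<partial>lborel) = (\<integral>\<^sup>+s. 2 * (\<integral>\<^sup>+t'. U(s,t',r) * D2(s,t',r) \<partial>lborel) \<partial>lborel)"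
        unfolding A2_def by (intro nn_integral_cong) (simp add: nn_integral_cmult mult.assoc)
      also have "\<dots> = 2 * X2 r" unfolding X2_def
        by (simp add: nn_integral_cmult)
      finally show ?thesis .
    qed
    also have "2 * X2 r * (2 * X1 r) = 2 * (2 * X1 r * X2 r)" by (simp add: mult_ac)
    also have "\<dots> \<le> 2 * (P r * (Q1 r + Q2 r))"
      using ennreal_amgm_aux[OF CS[OF mD1, of r] CS[OF mD2, of r]]
      unfolding X1_def X2_def Q1_def Q2_def by (intro mult_left_mono) auto
    finally show ?thesis .
  qed
  have "(\<integral>\<^sup>+x. U x ^ 4 \<partial>lborel) = (\<integral>\<^sup>+r. \<integral>\<^sup>+s. \<integral>\<^sup>+t. U(s,t,r)^4 \<partial>lborel \<partial>lborel \<partial>lborel)"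
    by (rule T_rst) measurable
  also have "\<dots> \<le> (\<integral>\<^sup>+r. 2 * (N * (Q1 r + Q2 r)) \<partial>lborel)"
  proof (intro nn_integral_mono)
    fix r
    show "(\<integral>\<^sup>+s. \<integral>\<^sup>+t. U(s,t,r)^4 \<partial>lborel \<partial>lborel) \<le> 2 * (N * (Q1 r + Q2 r))"
      using slice[of r] PN[of r] by (meson mult_left_mono mult_right_mono order_trans zero_le)
  qed
  also have "\<dots> = 2 * (N * ((\<integral>\<^sup>+r. Q1 r \<partial>lborel) + (\<integral>\<^sup>+r. Q2 r \<partial>lborel)))"
    unfolding Q1_def Q2_def by (simp add: nn_integral_cmult nn_integral_add)
  also have "(\<integral>\<^sup>+r. Q1 r \<partial>lborel) = (\<integral>\<^sup>+x. D1 x^2 \<partial>lborel)"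
    unfolding Q1_def by (rule T_rst[symmetric]) measurable
  also have "(\<integral>\<^sup>+r. Q2 r \<partial>lborel) = (\<integral>\<^sup>+x. D2 x^2 \<partial>lborel)"
    unfolding Q2_def by (rule T_rst[symmetric]) measurable
  also have "(\<integral>\<^sup>+x. D1 x^2 \<partial>lborel) + (\<integral>\<^sup>+x. D2 x^2 \<partial>lborel) \<le> N"
  proof -
    have "(\<integral>\<^sup>+x. D1 x^2 \<partial>lborel) + (\<integral>\<^sup>+x. D2 x^2 \<partial>lborel) = (\<integral>\<^sup>+x. D1 x^2 + D2 x^2 \<partial>lborel)"
      by (simp add: nn_integral_add)
    also have "\<dots> \<le> N" unfolding N_def
      by (intro nn_integral_mono) (simp add: add.assoc add_increasing add_mono)
    finally show ?thesis .
  qed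
  then have "2 * (N * ((\<integral>\<^sup>+x. D1 x^2 \<partial>lborel) + (\<integral>\<^sup>+x. D2 x^2 \<partial>lborel))) \<le> 2 * (N * N)"
    by (intro mult_left_mono) auto
  finally show ?thesis unfolding N_def by (simp add: power2_eq_square)
qed


lemma hvd_line:
  fixes u :: "'a::euclidean_space \<Rightarrow> complex"
  assumes diff: "\<And>y. u differentiable (at y)"
  shows "((\<lambda>\<sigma>. u (x + (\<sigma> - c) *\<^sub>R b)) has_vector_derivative dderiv b u (x + (\<sigma> - c) *\<^sub>R b)) (at \<sigma> within S)"
proof -
  let ?y = "x + (\<sigma> - c) *\<^sub>R b"
  have du: "(u has_derivative frechet_derivative u (at ?y)) (at ?y)"
    using diff frechet_derivative_works by blast
  have dl: "((\<lambda>\<sigma>::real. x + (\<sigma> - c) *\<^sub>R b) has_derivative (\<lambda>t. t *\<^sub>R b)) (at \<sigma>)"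
    by (auto intro!: derivative_eq_intros)
  have "((\<lambda>\<sigma>. u (x + (\<sigma> - c) *\<^sub>R b)) has_derivative (\<lambda>t. frechet_derivative u (at ?y) (t *\<^sub>R b))) (at \<sigma>)"
    using diff_chain_at[OF dl du] by (simp add: comp_def)
  moreover have "frechet_derivative u (at ?y) (t *\<^sub>R b) = t *\<^sub>R dderiv b u ?y" for t
    using has_derivative_bounded_linear[OF du] unfolding dderiv_def
    by (simp add: bounded_linear.linear linear_scale)
  ultimately have "((\<lambda>\<sigma>. u (x + (\<sigma> - c) *\<^sub>R b)) has_vector_derivative dderiv b u ?y) (at \<sigma>)"
    unfolding has_vector_derivative_def by simp
  then show ?thesis by (rule has_vector_derivative_at_within)
qed

lemma line_bound:
  fixes u :: "'a::euclidean_space \<Rightarrow> complex"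
  assumes diff: "\<And>y. u differentiable (at y)"
    and cont: "continuous_on UNIV (dderiv b u)"
    and supp: "bounded {y. u y \<noteq> 0}"
    and b: "b \<in> Basis"
  shows "ennreal ((cmod (u x))^2) \<le> (\<integral>\<^sup>+\<sigma>. ennreal (2 * cmod (u (x + (\<sigma> - c) *\<^sub>R b)) * cmod (dderiv b u (x + (\<sigma> - c) *\<^sub>R b))) \<partial>lborel)"
proof -
  define h where "h \<sigma> = u (x + (\<sigma> - c) *\<^sub>R b)" for \<sigma>
  define h' where "h' \<sigma> = dderiv b u (x + (\<sigma> - c) *\<^sub>R b)" for \<sigma>
  have hd: "(h has_vector_derivative h' \<sigma>) (at \<sigma> within S)" for \<sigma> S
    unfolding h_def h'_def by (rule hvd_line[OF diff])
  have ucont: "continuous_on UNIV u"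
    using diff by (simp add: differentiable_imp_continuous_on differentiable_on_def)
  have hc: "continuous_on UNIV h" unfolding h_def
    by (intro continuous_on_compose2[OF ucont]) (auto intro!: continuous_intros)
  have h'c: "continuous_on UNIV h'" unfolding h'_def
    by (intro continuous_on_compose2[OF cont]) (auto intro!: continuous_intros)
  obtain R where R: "\<And>y. u y \<noteq> 0 \<Longrightarrow> norm y \<le> R" using supp unfolding bounded_iff by auto
  define a0 where "a0 = c - norm x - \<bar>R\<bar> - 1"
  have a0c: "a0 \<le> c" unfolding a0_def using norm_ge_zero[of x] abs_ge_zero[of R] by linarith
  have h0: "h a0 = 0"
  proof (rule ccontr)
    assume "h a0 \<noteq> 0"
    then have "norm (x + (a0 - c) *\<^sub>R b) \<le> R" using R unfolding h_def by blast
    moreover have "norm (x + (a0 - c) *\<^sub>R b) \<ge> \<bar>a0 - c\<bar> - norm x"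
    proof -
      have "norm ((a0 - c) *\<^sub>R b) \<le> norm (x + (a0 - c) *\<^sub>R b) + norm x"
        by (metis add.commute add_diff_cancel_left' norm_triangle_ineq4)
      then show ?thesis using b by simp
    qed
    ultimately show False unfolding a0_def by simp
  qed
  define G where "G \<sigma> = h \<sigma> * cnj (h \<sigma>)" for \<sigma>
  define G' where "G' \<sigma> = h \<sigma> * cnj (h' \<sigma>) + h' \<sigma> * cnj (h \<sigma>)" for \<sigma>
  have Gd: "(G has_vector_derivative G' \<sigma>) (at \<sigma> within {a0..c})" for \<sigma>
    unfolding G_def G'_def using hd[of \<sigma> "{a0..c}"]
    by (auto intro!: derivative_eq_intros)
  have FTC: "(G' has_integral (G c - G a0)) {a0..c}"
    by (rule fundamental_theorem_of_calculus[OF a0c]) (use Gd in auto)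
  have Gc: "G c = of_real ((cmod (u x))^2)" unfolding G_def h_def
    by simp (metis complex_norm_square of_real_power)
  define F where "F \<sigma> = 2 * cmod (h \<sigma>) * cmod (h' \<sigma>)" for \<sigma>
  have Fc: "continuous_on UNIV F" unfolding F_def
    by (intro continuous_intros hc h'c)
  have Fint: "F integrable_on {a0..c}"
    by (rule integrable_continuous_interval) (use Fc continuous_on_subset in blast)
  have "(cmod (u x))^2 = norm (integral {a0..c} G')"
    using FTC h0 Gc unfolding G_def by (simp add: integral_unique norm_power)
  also have "\<dots> \<le> integral {a0..c} F"
  proof (rule integral_norm_bound_integral)
    show "G' integrable_on {a0..c}" using FTC by blast
    show "F integrable_on {a0..c}" by (rule Fint)
    fix \<sigma> show "norm (G' \<sigma>) \<le> F \<sigma>"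
    proof -
      have "norm (G' \<sigma>) \<le> norm (h \<sigma> * cnj (h' \<sigma>)) + norm (h' \<sigma> * cnj (h \<sigma>))"
        unfolding G'_def by (rule norm_triangle_ineq)
      also have "\<dots> = F \<sigma>" unfolding F_def by (simp add: norm_mult)
      finally show ?thesis .
    qed
  qed
  finally have le: "(cmod (u x))^2 \<le> integral {a0..c} F" .
  have "ennreal (integral {a0..c} F) = (\<integral>\<^sup>+\<sigma>. ennreal (F \<sigma>) * indicator {a0..c} \<sigma> \<partial>lborel)"
    by (rule nn_integral_has_integral_lebesgue'[symmetric]) (use Fint in \<open>auto simp: integrable_integral, simp add: F_def\<close>)
  also have "\<dots> \<le> (\<integral>\<^sup>+\<sigma>. ennreal (F \<sigma>) \<partial>lborel)"
    by (intro nn_integral_mono) (simp add: indicator_def)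
  finally show ?thesis using le unfolding F_def h_def h'_def
    by (meson ennreal_leI order_trans)
qed


lemma emeasure_lborel_Times3:
  fixes A B C :: "real set"
  assumes "A \<in> sets borel" "B \<in> sets borel" "C \<in> sets borel"
  shows "emeasure (lborel :: (real\<times>real\<times>real) measure) (A \<times> B \<times> C) = emeasure lborel A * emeasure lborel B * emeasure lborel C"
proof -
  have "B \<times> C \<in> sets ((lborel::real measure) \<Otimes>\<^sub>M lborel)" using assms by (intro pair_measureI) auto
  then have BC: "B \<times> C \<in> sets (lborel :: (real\<times>real) measure)" by (simp only: lborel_prod)
  have "emeasure (lborel :: (real\<times>real\<times>real) measure) (A \<times> B \<times> C) = emeasure (lborel \<Otimes>\<^sub>M lborel) (A \<times> (B \<times> C))"
    by (simp add: lborel_prod)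
  also have "\<dots> = emeasure lborel A * emeasure (lborel :: (real\<times>real) measure) (B \<times> C)"
    using assms BC by (intro lborel.emeasure_pair_measure_Times) auto
  also have "emeasure (lborel :: (real\<times>real) measure) (B \<times> C) = emeasure (lborel \<Otimes>\<^sub>M lborel) (B \<times> C)"
    by (simp add: lborel_prod)
  also have "\<dots> = emeasure lborel B * emeasure lborel C"
    using assms by (intro lborel.emeasure_pair_measure_Times) auto
  finally show ?thesis by (simp add: mult.assoc)
qed

lemma lborel_T3:
  fixes b1 b2 b3 :: "'a::euclidean_space"
  assumes B: "Basis = {b1,b2,b3}" and d: "b1 \<noteq> b2" "b1 \<noteq> b3" "b2 \<noteq> b3"
  shows "distr lborel borel (\<lambda>p::real\<times>real\<times>real. fst p *\<^sub>R b1 + fst (snd p) *\<^sub>R b2 + snd (snd p) *\<^sub>R b3) = (lborel::'a measure)"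
proof (rule lborel_eqI[symmetric])
  let ?T = "\<lambda>p::real\<times>real\<times>real. fst p *\<^sub>R b1 + fst (snd p) *\<^sub>R b2 + snd (snd p) *\<^sub>R b3"
  have bb: "b1 \<in> Basis" "b2 \<in> Basis" "b3 \<in> Basis" using B by auto
  have ip: "?T p \<bullet> b1 = fst p" "?T p \<bullet> b2 = fst (snd p)" "?T p \<bullet> b3 = snd (snd p)" for p
    using bb d d[symmetric] by (simp_all add: inner_add_left inner_Basis)
  have Tm: "?T \<in> borel_measurable borel"
    by (rule borel_measurable_continuous_onI) (intro continuous_intros)
  fix l u :: 'a
  assume lu: "\<And>b. b \<in> Basis \<Longrightarrow> l \<bullet> b \<le> u \<bullet> b"
  have pre: "?T -` box l u \<inter> space lborel = {l\<bullet>b1<..<u\<bullet>b1} \<times> {l\<bullet>b2<..<u\<bullet>b2} \<times> {l\<bullet>b3<..<u\<bullet>b3}"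
    by (auto simp: box_def B ip)
  have "emeasure (distr lborel borel ?T) (box l u) = emeasure lborel (?T -` box l u \<inter> space lborel)"
    using Tm by (simp add: emeasure_distr)
  also have "\<dots> = ennreal ((u-l)\<bullet>b1) * ennreal ((u-l)\<bullet>b2) * ennreal ((u-l)\<bullet>b3)"
    unfolding pre using lu bb by (simp add: emeasure_lborel_Times3 inner_diff_left)
  also have "\<dots> = (\<Prod>b\<in>Basis. (u - l) \<bullet> b)"
    using lu bb d by (simp add: B ennreal_mult' inner_diff_left mult.assoc)
  finally show "emeasure (distr lborel borel ?T) (box l u) = (\<Prod>b\<in>Basis. (u - l) \<bullet> b)" .
qed simp


lemma lborel_T2:
  fixes b1 b2 :: "'a::euclidean_space"
  assumes B: "Basis = {b1,b2}" and d: "b1 \<noteq> b2"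
  shows "distr lborel borel (\<lambda>p::real\<times>real. fst p *\<^sub>R b1 + snd p *\<^sub>R b2) = (lborel::'a measure)"
proof (rule lborel_eqI[symmetric])
  let ?T = "\<lambda>p::real\<times>real. fst p *\<^sub>R b1 + snd p *\<^sub>R b2"
  have bb: "b1 \<in> Basis" "b2 \<in> Basis" using B by auto
  have ip: "?T p \<bullet> b1 = fst p" "?T p \<bullet> b2 = snd p" for p
    using bb d d[symmetric] by (simp_all add: inner_add_left inner_Basis)
  have Tm: "?T \<in> borel_measurable borel"
    by (rule borel_measurable_continuous_onI) (intro continuous_intros)
  fix l u :: 'a
  assume lu: "\<And>b. b \<in> Basis \<Longrightarrow> l \<bullet> b \<le> u \<bullet> b"
  have pre: "?T -` box l u \<inter> space lborel = {l\<bullet>b1<..<u\<bullet>b1} \<times> {l\<bullet>b2<..<u\<bullet>b2}"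
    by (auto simp: box_def B ip)
  have "emeasure (distr lborel borel ?T) (box l u) = emeasure lborel (?T -` box l u \<inter> space lborel)"
    using Tm by (simp add: emeasure_distr)
  also have "\<dots> = emeasure (lborel \<Otimes>\<^sub>M lborel) ({l\<bullet>b1<..<u\<bullet>b1} \<times> {l\<bullet>b2<..<u\<bullet>b2})"
    unfolding pre by (simp only: lborel_prod)
  also have "\<dots> = ennreal ((u-l)\<bullet>b1) * ennreal ((u-l)\<bullet>b2)"
    using lu bb by (subst lborel.emeasure_pair_measure_Times) (auto simp: inner_diff_left)
  also have "\<dots> = (\<Prod>b\<in>Basis. (u - l) \<bullet> b)"
    using lu bb d by (simp add: B ennreal_mult' inner_diff_left)
  finally show "emeasure (distr lborel borel ?T) (box l u) = (\<Prod>b\<in>Basis. (u - l) \<bullet> b)" .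
qed simp

lemma T2_fst:
  fixes F :: "real\<times>real \<Rightarrow> ennreal"
  assumes [measurable]: "F \<in> borel_measurable borel"
  shows "(\<integral>\<^sup>+x. F x \<partial>lborel) = (\<integral>\<^sup>+s. \<integral>\<^sup>+t. F (s,t) \<partial>lborel \<partial>lborel)"
proof -
  have m: "F \<in> borel_measurable (lborel \<Otimes>\<^sub>M lborel)" using meas2 assms by blast
  show ?thesis by (subst lborel_prod[symmetric]) (rule lborel.nn_integral_fst[symmetric, OF m])
qed

lemma core2:
  fixes U D1 D2 :: "real\<times>real \<Rightarrow> ennreal"
  assumes mU[measurable]: "U \<in> borel_measurable borel"
    and mD1[measurable]: "D1 \<in> borel_measurable borel"
    and mD2[measurable]: "D2 \<in> borel_measurable borel"
    and H1: "\<And>s t. U(s,t)^2 \<le> (\<integral>\<^sup>+s'. 2 * U(s',t) * D1(s',t) \<partial>lborel)"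
    and H2: "\<And>s t. U(s,t)^2 \<le> (\<integral>\<^sup>+t'. 2 * U(s,t') * D2(s,t') \<partial>lborel)"
  shows "(\<integral>\<^sup>+x. U x ^ 4 \<partial>lborel) \<le> 2 * (\<integral>\<^sup>+x. U x^2 + D1 x^2 + D2 x^2 \<partial>lborel)^2"
proof -
  define N where "N = (\<integral>\<^sup>+x. U x^2 + D1 x^2 + D2 x^2 \<partial>lborel)"
  define A1 where "A1 t = (\<integral>\<^sup>+s'. 2 * U(s',t) * D1(s',t) \<partial>lborel)" for t
  define A2 where "A2 s = (\<integral>\<^sup>+t'. 2 * U(s,t') * D2(s,t') \<partial>lborel)" for s
  have [measurable]: "A1 \<in> borel_measurable lborel" unfolding A1_def by measurable
  have [measurable]: "A2 \<in> borel_measurable lborel" unfolding A2_def by measurable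
  have "(\<integral>\<^sup>+x. U x ^ 4 \<partial>lborel) = (\<integral>\<^sup>+s. \<integral>\<^sup>+t. U(s,t)^4 \<partial>lborel \<partial>lborel)"
    by (rule T2_fst) measurable
  also have "\<dots> \<le> (\<integral>\<^sup>+s. \<integral>\<^sup>+t. A2 s * A1 t \<partial>lborel \<partial>lborel)"
  proof (intro nn_integral_mono)
    fix s t
    have "U(s,t)^4 = U(s,t)^2 * U(s,t)^2" by (simp add: power_add[symmetric])
    also have "\<dots> \<le> A2 s * A1 t" unfolding A1_def A2_def by (intro mult_mono H1 H2) auto
    finally show "U(s,t)^4 \<le> A2 s * A1 t" .
  qed
  also have "\<dots> = (\<integral>\<^sup>+s. A2 s * (\<integral>\<^sup>+t. A1 t \<partial>lborel) \<partial>lborel)"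
    by (simp add: nn_integral_cmult)
  also have "\<dots> = (\<integral>\<^sup>+s. A2 s \<partial>lborel) * (\<integral>\<^sup>+t. A1 t \<partial>lborel)"
    by (simp add: nn_integral_multc)
  also have "\<dots> \<le> N * N"
  proof (intro mult_mono)
    have "(\<integral>\<^sup>+s. A2 s \<partial>lborel) = (\<integral>\<^sup>+x. 2 * U x * D2 x \<partial>lborel)"
      unfolding A2_def by (rule T2_fst[symmetric]) measurable
    also have "\<dots> \<le> N" unfolding N_def
    proof (intro nn_integral_mono)
      fix x
      have "2 * U x * D2 x \<le> U x^2 + D2 x^2" by (rule sum_of_squares_ge_ennreal)
      also have "\<dots> \<le> U x^2 + D1 x^2 + D2 x^2" by (simp add: add_increasing add_mono)
      finally show "2 * U x * D2 x \<le> U x^2 + D1 x^2 + D2 x^2" .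
    qed
    finally show "(\<integral>\<^sup>+s. A2 s \<partial>lborel) \<le> N" .
    have "(\<integral>\<^sup>+t. A1 t \<partial>lborel) = (\<integral>\<^sup>+t. \<integral>\<^sup>+s. 2 * U(s,t) * D1(s,t) \<partial>lborel \<partial>lborel)"
      unfolding A1_def by simp
    also have "\<dots> = (\<integral>\<^sup>+s. \<integral>\<^sup>+t. 2 * U(s,t) * D1(s,t) \<partial>lborel \<partial>lborel)"
      by (rule T_swap[symmetric, of "\<lambda>x. 2 * U x * D1 x", simplified]) measurable
    also have "\<dots> = (\<integral>\<^sup>+x. 2 * U x * D1 x \<partial>lborel)"
      by (rule T2_fst[symmetric]) measurable
    also have "\<dots> \<le> N" unfolding N_def
    proof (intro nn_integral_mono)
      fix x
      have "2 * U x * D1 x \<le> U x^2 + D1 x^2" by (rule sum_of_squares_ge_ennreal)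
      also have "\<dots> \<le> U x^2 + D1 x^2 + D2 x^2" by (simp add: add_increasing2)
      finally show "2 * U x * D1 x \<le> U x^2 + D1 x^2 + D2 x^2" .
    qed
    finally show "(\<integral>\<^sup>+t. A1 t \<partial>lborel) \<le> N" .
  qed auto
  also have "\<dots> \<le> 2 * N^2" by (simp add: power2_eq_square mult_2 add_increasing)
  finally show ?thesis unfolding N_def .
qed


lemma ennreal_2ab: "0 \<le> a \<Longrightarrow> 0 \<le> b \<Longrightarrow> ennreal (2 * a * b) = 2 * ennreal a * ennreal b"
  by (simp add: ennreal_mult)

lemma sob3_test:
  fixes u :: "'a::euclidean_space \<Rightarrow> complex"
  assumes dim: "DIM('a) = 3"
    and diff: "\<And>y. u differentiable (at y)"
    and cont: "\<And>b. b \<in> Basis \<Longrightarrow> continuous_on UNIV (dderiv b u)"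
    and supp: "bounded {y. u y \<noteq> 0}"
  shows "(\<integral>\<^sup>+x. ennreal ((cmod (u x))^4) \<partial>lborel) \<le>
           2 * (\<integral>\<^sup>+x. ennreal ((cmod (u x))^2 + (\<Sum>b\<in>Basis. (cmod (dderiv b u x))^2)) \<partial>lborel)^2"
proof -
  obtain b1 b2 b3 where B: "(Basis::'a set) = {b1,b2,b3}" and d: "b1 \<noteq> b2" "b1 \<noteq> b3" "b2 \<noteq> b3"
    using dim by (metis card_3_iff)
  have bb: "b1 \<in> Basis" "b2 \<in> Basis" "b3 \<in> Basis" using B by auto
  define T where "T p = fst p *\<^sub>R b1 + fst (snd p) *\<^sub>R b2 + snd (snd p) *\<^sub>R b3" for p :: "real\<times>real\<times>real"
  have Tc: "continuous_on UNIV T" unfolding T_def by (intro continuous_intros)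
  have Tm[measurable]: "T \<in> borel_measurable borel" using Tc by (rule borel_measurable_continuous_onI)
  have ucont: "continuous_on UNIV u"
    using diff by (simp add: differentiable_imp_continuous_on differentiable_on_def)
  define U where "U p = ennreal (cmod (u (T p)))" for p
  define D where "D b p = ennreal (cmod (dderiv b u (T p)))" for b p
  have mU[measurable]: "U \<in> borel_measurable borel" unfolding U_def
  proof -
    have "continuous_on UNIV (\<lambda>p. cmod (u (T p)))"
      by (intro continuous_intros continuous_on_compose2[OF ucont Tc]) auto
    then have "(\<lambda>p. cmod (u (T p))) \<in> borel_measurable borel" by (rule borel_measurable_continuous_onI)
    then show "(\<lambda>p. ennreal (cmod (u (T p)))) \<in> borel_measurable borel" by measurable
  qed
  have mD[measurable]: "D b \<in> borel_measurable borel" if "b \<in> Basis" for b unfolding D_def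
  proof -
    have "continuous_on UNIV (\<lambda>p. cmod (dderiv b u (T p)))"
      by (intro continuous_intros continuous_on_compose2[OF cont[OF that] Tc]) auto
    then have "(\<lambda>p. cmod (dderiv b u (T p))) \<in> borel_measurable borel" by (rule borel_measurable_continuous_onI)
    then show "(\<lambda>p. ennreal (cmod (dderiv b u (T p)))) \<in> borel_measurable borel" by measurable
  qed
  have LB: "U p ^ 2 \<le> (\<integral>\<^sup>+\<sigma>. 2 * U (g \<sigma>) * D b (g \<sigma>) \<partial>lborel)"
    if b: "b \<in> Basis" and g: "\<And>\<sigma>. T (g \<sigma>) = T p + (\<sigma> - c) *\<^sub>R b" for b p g c
  proof -
    have "U p ^ 2 = ennreal ((cmod (u (T p)))^2)" unfolding U_def by (simp add: ennreal_power)
    also have "\<dots> \<le> (\<integral>\<^sup>+\<sigma>. ennreal (2 * cmod (u (T p + (\<sigma> - c) *\<^sub>R b)) * cmod (dderiv b u (T p + (\<sigma> - c) *\<^sub>R b))) \<partial>lborel)"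
      by (rule line_bound[OF diff cont[OF b] supp b])
    also have "\<dots> = (\<integral>\<^sup>+\<sigma>. 2 * U (g \<sigma>) * D b (g \<sigma>) \<partial>lborel)"
      unfolding U_def D_def g by (simp add: ennreal_2ab)
    finally show ?thesis .
  qed
  have H1: "U(s,t,r)^2 \<le> (\<integral>\<^sup>+s'. 2 * U(s',t,r) * D b1 (s',t,r) \<partial>lborel)" for s t r
    by (rule LB[OF bb(1), where c=s]) (simp add: T_def algebra_simps)
  have H2: "U(s,t,r)^2 \<le> (\<integral>\<^sup>+t'. 2 * U(s,t',r) * D b2 (s,t',r) \<partial>lborel)" for s t r
    by (rule LB[OF bb(2), where c=t]) (simp add: T_def algebra_simps)
  have H3: "U(s,t,r)^2 \<le> (\<integral>\<^sup>+r'. 2 * U(s,t,r') * D b3 (s,t,r') \<partial>lborel)" for s t r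
    by (rule LB[OF bb(3), where c=r]) (simp add: T_def algebra_simps)
  have core: "(\<integral>\<^sup>+p. U p ^ 4 \<partial>lborel) \<le> 2 * (\<integral>\<^sup>+p. U p^2 + D b1 p^2 + D b2 p^2 + D b3 p^2 \<partial>lborel)^2"
    by (rule core3[OF mU mD[OF bb(1)] mD[OF bb(2)] mD[OF bb(3)] H1 H2 H3])
  have distr: "(\<integral>\<^sup>+x. G x \<partial>lborel) = (\<integral>\<^sup>+p. G (T p) \<partial>lborel)"
    if [measurable]: "G \<in> borel_measurable borel" for G :: "'a \<Rightarrow> ennreal"
  proof -
    have "(\<integral>\<^sup>+x. G x \<partial>lborel) = (\<integral>\<^sup>+x. G x \<partial>(distr lborel borel T))"
      using lborel_T3[OF B d] unfolding T_def by simp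
    also have "\<dots> = (\<integral>\<^sup>+p. G (T p) \<partial>lborel)" by (rule nn_integral_distr) auto
    finally show ?thesis .
  qed
  have ucm: "(\<lambda>x. cmod (u x)) \<in> borel_measurable borel"
    by (rule borel_measurable_continuous_onI) (intro continuous_intros ucont)
  have dcm: "(\<lambda>x. cmod (dderiv b u x)) \<in> borel_measurable borel" if "b \<in> Basis" for b
    by (rule borel_measurable_continuous_onI) (intro continuous_intros cont[OF that])
  have "(\<integral>\<^sup>+x. ennreal ((cmod (u x))^4) \<partial>lborel) = (\<integral>\<^sup>+p. U p ^ 4 \<partial>lborel)"
    by (subst distr) (use ucm in \<open>measurable, simp add: U_def ennreal_power\<close>)
  also have "\<dots> \<le> 2 * (\<integral>\<^sup>+p. U p^2 + D b1 p^2 + D b2 p^2 + D b3 p^2 \<partial>lborel)^2" by (rule core)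
  also have "(\<integral>\<^sup>+p. U p^2 + D b1 p^2 + D b2 p^2 + D b3 p^2 \<partial>lborel) =
      (\<integral>\<^sup>+x. ennreal ((cmod (u x))^2 + (\<Sum>b\<in>Basis. (cmod (dderiv b u x))^2)) \<partial>lborel)"
  proof (subst distr)
    show "(\<lambda>x. ennreal ((cmod (u x))^2 + (\<Sum>b\<in>Basis. (cmod (dderiv b u x))^2))) \<in> borel_measurable borel"
      using ucm dcm[OF bb(1)] dcm[OF bb(2)] dcm[OF bb(3)] unfolding B using d by simp measurable
    show "(\<integral>\<^sup>+p. U p^2 + D b1 p^2 + D b2 p^2 + D b3 p^2 \<partial>lborel) =
      (\<integral>\<^sup>+p. ennreal ((cmod (u (T p)))^2 + (\<Sum>b\<in>Basis. (cmod (dderiv b u (T p)))^2)) \<partial>lborel)"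
      unfolding B using d by (intro nn_integral_cong) (simp add: U_def D_def ennreal_power ennreal_plus add.assoc)
  qed
  finally show ?thesis .
qed


lemma sob2_test:
  fixes u :: "'a::euclidean_space \<Rightarrow> complex"
  assumes dim: "DIM('a) = 2"
    and diff: "\<And>y. u differentiable (at y)"
    and cont: "\<And>b. b \<in> Basis \<Longrightarrow> continuous_on UNIV (dderiv b u)"
    and supp: "bounded {y. u y \<noteq> 0}"
  shows "(\<integral>\<^sup>+x. ennreal ((cmod (u x))^4) \<partial>lborel) \<le>
           2 * (\<integral>\<^sup>+x. ennreal ((cmod (u x))^2 + (\<Sum>b\<in>Basis. (cmod (dderiv b u x))^2)) \<partial>lborel)^2"
proof -
  obtain b1 b2 where B: "(Basis::'a set) = {b1,b2}" and d: "b1 \<noteq> b2"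
    using dim by (metis card_2_iff)
  have bb: "b1 \<in> Basis" "b2 \<in> Basis" using B by auto
  define T where "T p = fst p *\<^sub>R b1 + snd p *\<^sub>R b2" for p :: "real\<times>real"
  have Tc: "continuous_on UNIV T" unfolding T_def by (intro continuous_intros)
  have Tm[measurable]: "T \<in> borel_measurable borel" using Tc by (rule borel_measurable_continuous_onI)
  have ucont: "continuous_on UNIV u"
    using diff by (simp add: differentiable_imp_continuous_on differentiable_on_def)
  define U where "U p = ennreal (cmod (u (T p)))" for p
  define D where "D b p = ennreal (cmod (dderiv b u (T p)))" for b p
  have mU[measurable]: "U \<in> borel_measurable borel" unfolding U_def
  proof -
    have "continuous_on UNIV (\<lambda>p. cmod (u (T p)))"
      by (intro continuous_intros continuous_on_compose2[OF ucont Tc]) auto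
    then have "(\<lambda>p. cmod (u (T p))) \<in> borel_measurable borel" by (rule borel_measurable_continuous_onI)
    then show "(\<lambda>p. ennreal (cmod (u (T p)))) \<in> borel_measurable borel" by measurable
  qed
  have mD[measurable]: "D b \<in> borel_measurable borel" if "b \<in> Basis" for b unfolding D_def
  proof -
    have "continuous_on UNIV (\<lambda>p. cmod (dderiv b u (T p)))"
      by (intro continuous_intros continuous_on_compose2[OF cont[OF that] Tc]) auto
    then have "(\<lambda>p. cmod (dderiv b u (T p))) \<in> borel_measurable borel" by (rule borel_measurable_continuous_onI)
    then show "(\<lambda>p. ennreal (cmod (dderiv b u (T p)))) \<in> borel_measurable borel" by measurable
  qed
  have LB: "U p ^ 2 \<le> (\<integral>\<^sup>+\<sigma>. 2 * U (g \<sigma>) * D b (g \<sigma>) \<partial>lborel)"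
    if b: "b \<in> Basis" and g: "\<And>\<sigma>. T (g \<sigma>) = T p + (\<sigma> - c) *\<^sub>R b" for b p g c
  proof -
    have "U p ^ 2 = ennreal ((cmod (u (T p)))^2)" unfolding U_def by (simp add: ennreal_power)
    also have "\<dots> \<le> (\<integral>\<^sup>+\<sigma>. ennreal (2 * cmod (u (T p + (\<sigma> - c) *\<^sub>R b)) * cmod (dderiv b u (T p + (\<sigma> - c) *\<^sub>R b))) \<partial>lborel)"
      by (rule line_bound[OF diff cont[OF b] supp b])
    also have "\<dots> = (\<integral>\<^sup>+\<sigma>. 2 * U (g \<sigma>) * D b (g \<sigma>) \<partial>lborel)"
      unfolding U_def D_def g by (simp add: ennreal_2ab)
    finally show ?thesis .
  qed
  have H1: "U(s,t)^2 \<le> (\<integral>\<^sup>+s'. 2 * U(s',t) * D b1 (s',t) \<partial>lborel)" for s t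
    by (rule LB[OF bb(1), where c=s]) (simp add: T_def algebra_simps)
  have H2: "U(s,t)^2 \<le> (\<integral>\<^sup>+t'. 2 * U(s,t') * D b2 (s,t') \<partial>lborel)" for s t
    by (rule LB[OF bb(2), where c=t]) (simp add: T_def algebra_simps)
  have core: "(\<integral>\<^sup>+p. U p ^ 4 \<partial>lborel) \<le> 2 * (\<integral>\<^sup>+p. U p^2 + D b1 p^2 + D b2 p^2 \<partial>lborel)^2"
    by (rule core2[OF mU mD[OF bb(1)] mD[OF bb(2)] H1 H2])
  have distr: "(\<integral>\<^sup>+x. G x \<partial>lborel) = (\<integral>\<^sup>+p. G (T p) \<partial>lborel)"
    if [measurable]: "G \<in> borel_measurable borel" for G :: "'a \<Rightarrow> ennreal"
  proof -
    have "(\<integral>\<^sup>+x. G x \<partial>lborel) = (\<integral>\<^sup>+x. G x \<partial>(distr lborel borel T))"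
      using lborel_T2[OF B d] unfolding T_def by simp
    also have "\<dots> = (\<integral>\<^sup>+p. G (T p) \<partial>lborel)" by (rule nn_integral_distr) auto
    finally show ?thesis .
  qed
  have ucm: "(\<lambda>x. cmod (u x)) \<in> borel_measurable borel"
    by (rule borel_measurable_continuous_onI) (intro continuous_intros ucont)
  have dcm: "(\<lambda>x. cmod (dderiv b u x)) \<in> borel_measurable borel" if "b \<in> Basis" for b
    by (rule borel_measurable_continuous_onI) (intro continuous_intros cont[OF that])
  have "(\<integral>\<^sup>+x. ennreal ((cmod (u x))^4) \<partial>lborel) = (\<integral>\<^sup>+p. U p ^ 4 \<partial>lborel)"
    by (subst distr) (use ucm in \<open>measurable, simp add: U_def ennreal_power\<close>)
  also have "\<dots> \<le> 2 * (\<integral>\<^sup>+p. U p^2 + D b1 p^2 + D b2 p^2 \<partial>lborel)^2" by (rule core)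
  also have "(\<integral>\<^sup>+p. U p^2 + D b1 p^2 + D b2 p^2 \<partial>lborel) =
      (\<integral>\<^sup>+x. ennreal ((cmod (u x))^2 + (\<Sum>b\<in>Basis. (cmod (dderiv b u x))^2)) \<partial>lborel)"
  proof (subst distr)
    show "(\<lambda>x. ennreal ((cmod (u x))^2 + (\<Sum>b\<in>Basis. (cmod (dderiv b u x))^2))) \<in> borel_measurable borel"
      using ucm dcm[OF bb(1)] dcm[OF bb(2)] unfolding B using d by simp measurable
    show "(\<integral>\<^sup>+p. U p^2 + D b1 p^2 + D b2 p^2 \<partial>lborel) =
      (\<integral>\<^sup>+p. ennreal ((cmod (u (T p)))^2 + (\<Sum>b\<in>Basis. (cmod (dderiv b u (T p)))^2)) \<partial>lborel)"
      unfolding B using d by (intro nn_integral_cong) (simp add: U_def D_def ennreal_power ennreal_plus add.assoc)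
  qed
  finally show ?thesis .
qed

lemma sob_test:
  fixes u :: "'a::euclidean_space \<Rightarrow> complex"
  assumes dim: "DIM('a) = 2 \<or> DIM('a) = 3"
    and diff: "\<And>y. u differentiable (at y)"
    and cont: "\<And>b. b \<in> Basis \<Longrightarrow> continuous_on UNIV (dderiv b u)"
    and supp: "bounded {y. u y \<noteq> 0}"
  shows "(\<integral>\<^sup>+x. ennreal ((cmod (u x))^4) \<partial>lborel) \<le>
           2 * (\<integral>\<^sup>+x. ennreal ((cmod (u x))^2 + (\<Sum>b\<in>Basis. (cmod (dderiv b u x))^2)) \<partial>lborel)^2"
  using dim sob2_test[OF _ diff cont supp] sob3_test[OF _ diff cont supp] by blast


lemma smooth_test: "test_fun D \<phi> \<Longrightarrow> set bs \<subseteq> Basis \<Longrightarrow> fold dderiv bs \<phi> differentiable (at y)"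
  unfolding test_fun_def smooth_fun_def by blast

lemma test_diff: "test_fun D \<phi> \<Longrightarrow> \<phi> differentiable (at y)"
  using smooth_test[of D \<phi> "[]" y] by simp

lemma test_ddiff: "test_fun D \<phi> \<Longrightarrow> b \<in> Basis \<Longrightarrow> dderiv b \<phi> differentiable (at y)"
  using smooth_test[of D \<phi> "[b]" y] by simp

lemma cont_of_diff: assumes "\<And>y. f differentiable (at y)" shows "continuous_on UNIV f"
proof (rule continuous_at_imp_continuous_on, intro ballI)
  fix x show "isCont f x" using assms[of x] by (rule differentiable_imp_continuous_within)
qed

lemma test_dcont: "test_fun D \<phi> \<Longrightarrow> b \<in> Basis \<Longrightarrow> continuous_on UNIV (dderiv b \<phi>)"
  by (rule cont_of_diff) (rule test_ddiff)

lemma test_cont: "test_fun D \<phi> \<Longrightarrow> continuous_on UNIV \<phi>"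
  by (rule cont_of_diff) (rule test_diff)

lemma test_bounded: "test_fun D \<phi> \<Longrightarrow> bounded {y. \<phi> y \<noteq> 0}"
  unfolding test_fun_def by (meson bounded_subset compact_imp_bounded closure_subset)

lemma test_out:
  assumes "test_fun D \<phi>" "x \<notin> D" shows "\<phi> x = 0"
proof (rule ccontr)
  assume "\<phi> x \<noteq> 0"
  then have "x \<in> closure {x. \<phi> x \<noteq> 0}" using closure_subset[of "{x. \<phi> x \<noteq> 0}"] by blast
  then show False using assms unfolding test_fun_def by blast
qed

lemma test_dout:
  assumes "test_fun D \<phi>" "x \<notin> D"
  shows "dderiv b \<phi> x = 0"
proof -
  define S where "S = closure {x. \<phi> x \<noteq> 0}"
  have xS: "x \<in> - S" using assms unfolding test_fun_def S_def by auto
  have z: "\<phi> y = 0" if "y \<in> - S" for y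
  proof (rule ccontr)
    assume "\<phi> y \<noteq> 0"
    then have "y \<in> S" unfolding S_def using closure_subset[of "{x. \<phi> x \<noteq> 0}"] by blast
    then show False using that by blast
  qed
  have o: "open (- S)" unfolding S_def by (rule open_Compl[OF closed_closure])
  have d0: "((\<lambda>_. 0::complex) has_derivative (\<lambda>_. 0)) (at x within UNIV)" by (rule has_derivative_const)
  have "(\<phi> has_derivative (\<lambda>_. 0)) (at x)"
    using has_derivative_transform_within_open[OF d0 o xS] z by metis
  then have "(\<lambda>_. 0) = frechet_derivative \<phi> (at x)" by (rule frechet_derivative_at)
  then have "frechet_derivative \<phi> (at x) = (\<lambda>_. 0)" by (rule sym)
  then show ?thesis unfolding dderiv_def by simp
qed

lemma nn_integral_onD:
  fixes f :: "'a::euclidean_space \<Rightarrow> ennreal"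
  assumes D: "open D" and f: "f \<in> borel_measurable borel" and out: "\<And>x. x \<notin> D \<Longrightarrow> f x = 0"
  shows "(\<integral>\<^sup>+x. f x \<partial>lebesgue_on D) = (\<integral>\<^sup>+x. f x \<partial>lborel)"
proof -
  have "D \<in> sets lebesgue" using D by auto
  then have "(\<integral>\<^sup>+x. f x \<partial>lebesgue_on D) = (\<integral>\<^sup>+x. f x * indicator D x \<partial>lebesgue)"
    by (simp add: nn_integral_restrict_space)
  also have "\<dots> = (\<integral>\<^sup>+x. f x \<partial>lebesgue)"
    by (intro nn_integral_cong) (use out in \<open>auto simp: indicator_def\<close>)
  also have "\<dots> = (\<integral>\<^sup>+x. f x \<partial>lborel)" by (simp add: nn_integral_completion)
  finally show ?thesis .
qed

lemma sob_testD:
  fixes \<phi> :: "'a::euclidean_space \<Rightarrow> complex"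
  assumes dim: "DIM('a) = 2 \<or> DIM('a) = 3" and D: "open D" and t: "test_fun D \<phi>"
  shows "(\<integral>\<^sup>+x. ennreal ((cmod (\<phi> x))^4) \<partial>lebesgue_on D) \<le>
           2 * (\<integral>\<^sup>+x. ennreal ((cmod (\<phi> x))^2 + (\<Sum>b\<in>Basis. (cmod (dderiv b \<phi> x))^2)) \<partial>lebesgue_on D)^2"
proof -
  have ucm[measurable]: "(\<lambda>x. cmod (\<phi> x)) \<in> borel_measurable borel"
    by (rule borel_measurable_continuous_onI) (intro continuous_intros test_cont[OF t])
  have dcm[measurable]: "(\<lambda>x. cmod (dderiv b \<phi> x)) \<in> borel_measurable borel" if "b \<in> Basis" for b
    by (rule borel_measurable_continuous_onI) (intro continuous_intros test_dcont[OF t that])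
  have "(\<integral>\<^sup>+x. ennreal ((cmod (\<phi> x))^4) \<partial>lebesgue_on D) = (\<integral>\<^sup>+x. ennreal ((cmod (\<phi> x))^4) \<partial>lborel)"
    by (rule nn_integral_onD[OF D]) (use test_out[OF t] in auto)
  also have "\<dots> \<le> 2 * (\<integral>\<^sup>+x. ennreal ((cmod (\<phi> x))^2 + (\<Sum>b\<in>Basis. (cmod (dderiv b \<phi> x))^2)) \<partial>lborel)^2"
    by (rule sob_test[OF dim test_diff[OF t] test_dcont[OF t] test_bounded[OF t]])
  also have "(\<integral>\<^sup>+x. ennreal ((cmod (\<phi> x))^2 + (\<Sum>b\<in>Basis. (cmod (dderiv b \<phi> x))^2)) \<partial>lborel) =
       (\<integral>\<^sup>+x. ennreal ((cmod (\<phi> x))^2 + (\<Sum>b\<in>Basis. (cmod (dderiv b \<phi> x))^2)) \<partial>lebesgue_on D)"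
    by (rule nn_integral_onD[OF D, symmetric]) (use test_out[OF t] test_dout[OF t] in auto)
  finally show ?thesis .
qed


lemma CS_real:
  fixes f g :: "'b \<Rightarrow> real"
  assumes [measurable]: "f \<in> borel_measurable M" "g \<in> borel_measurable M"
    and i: "integrable M (\<lambda>x. (f x)^2)" "integrable M (\<lambda>x. (g x)^2)"
  shows "integrable M (\<lambda>x. f x * g x)"
    and "(\<integral>x. \<bar>f x * g x\<bar> \<partial>M) \<le> sqrt (\<integral>x. (f x)^2 \<partial>M) * sqrt (\<integral>x. (g x)^2 \<partial>M)"
proof -
  have b: "norm (f x * g x) \<le> ((f x)^2 + (g x)^2) / 2" for x
  proof -
    have "0 \<le> (\<bar>f x\<bar> - \<bar>g x\<bar>)^2" by simp
    then show ?thesis by (simp add: power2_eq_square algebra_simps abs_mult)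
  qed
  show fg: "integrable M (\<lambda>x. f x * g x)"
    by (rule Bochner_Integration.integrable_bound[where f="\<lambda>x. ((f x)^2 + (g x)^2) / 2"])
       (use i b in auto)
  have "ennreal (\<integral>x. \<bar>f x * g x\<bar> \<partial>M) = (\<integral>\<^sup>+x. ennreal \<bar>f x * g x\<bar> \<partial>M)"
    by (rule nn_integral_eq_integral[symmetric]) (use fg in auto)
  also have "\<dots> = (\<integral>\<^sup>+x. ennreal \<bar>f x\<bar> * ennreal \<bar>g x\<bar> \<partial>M)"
    by (simp add: abs_mult ennreal_mult)
  finally have e1: "ennreal (\<integral>x. \<bar>f x * g x\<bar> \<partial>M) = (\<integral>\<^sup>+x. ennreal \<bar>f x\<bar> * ennreal \<bar>g x\<bar> \<partial>M)" .
  have e2: "(\<integral>\<^sup>+x. ennreal \<bar>h x\<bar> ^ 2 \<partial>M) = ennreal (\<integral>x. (h x)^2 \<partial>M)"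
    if "integrable M (\<lambda>x. (h x)^2)" for h :: "'b \<Rightarrow> real"
  proof -
    have "(\<integral>\<^sup>+x. ennreal \<bar>h x\<bar> ^ 2 \<partial>M) = (\<integral>\<^sup>+x. ennreal ((h x)^2) \<partial>M)"
      by (simp add: ennreal_power)
    also have "\<dots> = ennreal (\<integral>x. (h x)^2 \<partial>M)"
      by (rule nn_integral_eq_integral) (use that in auto)
    finally show ?thesis .
  qed
  have "(\<integral>\<^sup>+x. ennreal \<bar>f x\<bar> * ennreal \<bar>g x\<bar> \<partial>M)^2 \<le> (\<integral>\<^sup>+x. ennreal \<bar>f x\<bar> ^ 2 \<partial>M) * (\<integral>\<^sup>+x. ennreal \<bar>g x\<bar> ^ 2 \<partial>M)"
    by (rule Cauchy_Schwarz_nn_integral) measurable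
  then have "ennreal ((\<integral>x. \<bar>f x * g x\<bar> \<partial>M)^2) \<le> ennreal ((\<integral>x. (f x)^2 \<partial>M) * (\<integral>x. (g x)^2 \<partial>M))"
    unfolding e1[symmetric] e2[OF i(1)] e2[OF i(2)]
    by (simp add: ennreal_power ennreal_mult integral_nonneg_AE)
  then have "(\<integral>x. \<bar>f x * g x\<bar> \<partial>M)^2 \<le> (\<integral>x. (f x)^2 \<partial>M) * (\<integral>x. (g x)^2 \<partial>M)"
    by (simp add: ennreal_le_iff integral_nonneg_AE)
  then have "(\<integral>x. \<bar>f x * g x\<bar> \<partial>M) \<le> sqrt ((\<integral>x. (f x)^2 \<partial>M) * (\<integral>x. (g x)^2 \<partial>M))"
    by (rule real_le_rsqrt)
  then show "(\<integral>x. \<bar>f x * g x\<bar> \<partial>M) \<le> sqrt (\<integral>x. (f x)^2 \<partial>M) * sqrt (\<integral>x. (g x)^2 \<partial>M)"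
    by (simp only: real_sqrt_mult)
qed


lemma borel_measurable_cnj_comp[measurable (raw)]:
  fixes f :: "'b \<Rightarrow> complex"
  assumes "f \<in> borel_measurable M"
  shows "(\<lambda>x. cnj (f x)) \<in> borel_measurable M"
proof -
  have "(cnj :: complex \<Rightarrow> complex) \<in> borel_measurable borel"
    by (rule borel_measurable_continuous_onI) (intro continuous_intros continuous_on_id)
  from measurable_compose[OF assms this] show ?thesis .
qed

lemma fin_D: "bounded D \<Longrightarrow> open D \<Longrightarrow> finite_measure (lebesgue_on D)"
  by (intro finite_measure_lebesgue_on bounded_set_imp_lmeasurable) auto

lemma cont_bounded_on:
  fixes f :: "'a::euclidean_space \<Rightarrow> 'b::real_normed_vector"
  assumes "bounded D" "continuous_on UNIV f"
  shows "\<exists>B. \<forall>x\<in>D. norm (f x) \<le> B"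
proof -
  have "compact (closure D)" using assms(1) by (simp add: compact_closure)
  then have "compact (f ` closure D)" using assms(2) by (meson compact_continuous_image continuous_on_subset subset_UNIV)
  then have "bounded (f ` closure D)" by (rule compact_imp_bounded)
  then obtain B where "\<forall>y\<in>f ` closure D. norm y \<le> B" unfolding bounded_iff by blast
  then show ?thesis using closure_subset by blast
qed

lemma cont_L2:
  fixes f :: "'a::euclidean_space \<Rightarrow> complex"
  assumes D: "bounded D" "open D" and c: "continuous_on UNIV f"
  shows "L2 D f"
proof -
  interpret finite_measure "lebesgue_on D" using fin_D[OF D] .
  have m: "f \<in> borel_measurable (lebesgue_on D)"
    by (rule continuous_imp_measurable_on_sets_lebesgue) (use c D in \<open>auto intro: continuous_on_subset\<close>)
  obtain B where B: "\<forall>x\<in>D. norm (f x) \<le> B" using cont_bounded_on[OF D(1) c] by blast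
  have "integrable (lebesgue_on D) (\<lambda>x. (cmod (f x))^2)"
  proof (rule integrable_const_bound[where B="B^2"])
    show "AE x in lebesgue_on D. norm ((cmod (f x))^2) \<le> B^2"
      using B by (intro AE_I2) (auto simp: space_restrict_space intro!: power_mono)
    show "(\<lambda>x. (cmod (f x))^2) \<in> borel_measurable (lebesgue_on D)" using m by measurable
  qed
  then show ?thesis unfolding L2_def using m by simp
qed

lemma test_L2: "test_fun D \<phi> \<Longrightarrow> bounded D \<Longrightarrow> open D \<Longrightarrow> L2 D \<phi>"
  by (rule cont_L2) (auto intro: test_cont)

lemma test_dL2: "test_fun D \<phi> \<Longrightarrow> bounded D \<Longrightarrow> open D \<Longrightarrow> b \<in> Basis \<Longrightarrow> L2 D (dderiv b \<phi>)"
  by (rule cont_L2) (auto intro: test_dcont)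

lemma L2_meas: "L2 D f \<Longrightarrow> f \<in> borel_measurable (lebesgue_on D)"
  unfolding L2_def by blast

lemma L2_int: "L2 D f \<Longrightarrow> integrable (lebesgue_on D) (\<lambda>x. (cmod (f x))^2)"
  unfolding L2_def by blast

lemma norm_prod_le: "cmod (a * b) \<le> ((cmod a)^2 + (cmod b)^2) / 2"
proof -
  have "0 \<le> (cmod a - cmod b)^2" by simp
  then show ?thesis by (simp add: power2_eq_square algebra_simps norm_mult)
qed

lemma L2_prod:
  assumes "L2 D f" "L2 D g"
  shows "integrable (lebesgue_on D) (\<lambda>x. f x * g x)"
proof (rule Bochner_Integration.integrable_bound[where f="\<lambda>x. ((cmod (f x))^2 + (cmod (g x))^2) / 2"])
  show "integrable (lebesgue_on D) (\<lambda>x. ((cmod (f x))^2 + (cmod (g x))^2) / 2)"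
    using L2_int[OF assms(1)] L2_int[OF assms(2)] by auto
  show "(\<lambda>x. f x * g x) \<in> borel_measurable (lebesgue_on D)"
    using L2_meas[OF assms(1)] L2_meas[OF assms(2)] by measurable
  show "AE x in lebesgue_on D. norm (f x * g x) \<le> norm (((cmod (f x))^2 + (cmod (g x))^2) / 2)"
    by (intro AE_I2) (metis norm_prod_le abs_of_nonneg add_nonneg_nonneg divide_nonneg_pos zero_le_power2 zero_less_numeral real_norm_def order_trans order_refl)
qed

lemma L2_cnj: "L2 D f \<Longrightarrow> L2 D (\<lambda>x. cnj (f x))"
  unfolding L2_def by (auto intro: borel_measurable_cnj_comp)

lemma L2_diff:
  assumes "L2 D f" "L2 D g"
  shows "L2 D (\<lambda>x. f x - g x)"
  unfolding L2_def
proof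
  show m: "(\<lambda>x. f x - g x) \<in> borel_measurable (lebesgue_on D)"
    using L2_meas[OF assms(1)] L2_meas[OF assms(2)] by measurable
  show "integrable (lebesgue_on D) (\<lambda>x. (cmod (f x - g x))^2)"
  proof (rule Bochner_Integration.integrable_bound[where f="\<lambda>x. 2 * (cmod (f x))^2 + 2 * (cmod (g x))^2"])
    show "integrable (lebesgue_on D) (\<lambda>x. 2 * (cmod (f x))^2 + 2 * (cmod (g x))^2)"
      using L2_int[OF assms(1)] L2_int[OF assms(2)] by auto
    show "(\<lambda>x. (cmod (f x - g x))^2) \<in> borel_measurable (lebesgue_on D)" using m by measurable
    show "AE x in lebesgue_on D. norm ((cmod (f x - g x))^2) \<le> norm (2 * (cmod (f x))^2 + 2 * (cmod (g x))^2)"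
    proof (intro AE_I2)
      fix x
      have t: "cmod (f x - g x) \<le> cmod (f x) + cmod (g x)" by (rule norm_triangle_ineq4)
      have "(cmod (f x - g x))^2 \<le> (cmod (f x) + cmod (g x))^2" using t by (simp add: power_mono)
      also have "\<dots> \<le> 2 * (cmod (f x))^2 + 2 * (cmod (g x))^2"
      proof -
        have "0 \<le> (cmod (f x) - cmod (g x))^2" by simp
        then show ?thesis by (simp add: power2_eq_square algebra_simps)
      qed
      finally show "norm ((cmod (f x - g x))^2) \<le> norm (2 * (cmod (f x))^2 + 2 * (cmod (g x))^2)" by simp
    qed
  qed
qed

lemma L2_mult_bounded:
  assumes "L2 D f" and hm: "h \<in> borel_measurable (lebesgue_on D)" and hb: "\<And>x. x \<in> D \<Longrightarrow> cmod (h x) \<le> B"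
  shows "L2 D (\<lambda>x. h x * f x)"
  unfolding L2_def
proof
  show m: "(\<lambda>x. h x * f x) \<in> borel_measurable (lebesgue_on D)"
    using L2_meas[OF assms(1)] hm by measurable
  show "integrable (lebesgue_on D) (\<lambda>x. (cmod (h x * f x))^2)"
  proof (rule Bochner_Integration.integrable_bound[where f="\<lambda>x. B^2 * (cmod (f x))^2"])
    show "integrable (lebesgue_on D) (\<lambda>x. B^2 * (cmod (f x))^2)"
      using L2_int[OF assms(1)] by auto
    show "(\<lambda>x. (cmod (h x * f x))^2) \<in> borel_measurable (lebesgue_on D)" using m by measurable
    show "AE x in lebesgue_on D. norm ((cmod (h x * f x))^2) \<le> norm (B^2 * (cmod (f x))^2)"
    proof (rule AE_I2)
      fix x assume "x \<in> space (lebesgue_on D)"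
      then have xD: "x \<in> D" by (simp add: space_restrict_space)
      have "(cmod (h x * f x))^2 = (cmod (h x))^2 * (cmod (f x))^2" by (simp add: norm_mult power_mult_distrib)
      also have "\<dots> \<le> B^2 * (cmod (f x))^2"
        using hb[OF xD] by (intro mult_right_mono power_mono) auto
      finally show "norm ((cmod (h x * f x))^2) \<le> norm (B^2 * (cmod (f x))^2)" by simp
    qed
  qed
qed

lemma L2_CS:
  assumes "L2 D f" "L2 D g"
  shows "(\<integral>x. cmod (f x) * cmod (g x) \<partial>lebesgue_on D) \<le>
           sqrt (\<integral>x. (cmod (f x))^2 \<partial>lebesgue_on D) * sqrt (\<integral>x. (cmod (g x))^2 \<partial>lebesgue_on D)"
proof -
  have m: "(\<lambda>x. cmod (f x)) \<in> borel_measurable (lebesgue_on D)" "(\<lambda>x. cmod (g x)) \<in> borel_measurable (lebesgue_on D)"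
    using L2_meas[OF assms(1)] L2_meas[OF assms(2)] by measurable
  have "(\<integral>x. \<bar>cmod (f x) * cmod (g x)\<bar> \<partial>lebesgue_on D) \<le>
           sqrt (\<integral>x. (cmod (f x))^2 \<partial>lebesgue_on D) * sqrt (\<integral>x. (cmod (g x))^2 \<partial>lebesgue_on D)"
    by (rule CS_real(2)[OF m L2_int[OF assms(1)] L2_int[OF assms(2)]])
  then show ?thesis by simp
qed

lemma L2_norm_int_bound:
  assumes "L2 D f" "L2 D g"
  shows "cmod (\<integral>x. f x * g x \<partial>lebesgue_on D) \<le>
           sqrt (\<integral>x. (cmod (f x))^2 \<partial>lebesgue_on D) * sqrt (\<integral>x. (cmod (g x))^2 \<partial>lebesgue_on D)"
proof -
  have "cmod (\<integral>x. f x * g x \<partial>lebesgue_on D) \<le> (\<integral>x. cmod (f x * g x) \<partial>lebesgue_on D)"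
    by (rule integral_norm_bound)
  also have "\<dots> = (\<integral>x. cmod (f x) * cmod (g x) \<partial>lebesgue_on D)" by (simp add: norm_mult)
  also have "\<dots> \<le> sqrt (\<integral>x. (cmod (f x))^2 \<partial>lebesgue_on D) * sqrt (\<integral>x. (cmod (g x))^2 \<partial>lebesgue_on D)"
    by (rule L2_CS[OF assms])
  finally show ?thesis .
qed


definition normH1 :: "'a::euclidean_space set \<Rightarrow> ('a \<Rightarrow> complex) \<Rightarrow> real" where
  "normH1 D u = (LINT x|lebesgue_on D. (cmod (u x))\<^sup>2 + (\<Sum>b\<in>Basis. (cmod (wpd D b u x))\<^sup>2))"

lemma H_norm2_normH1: "H_norm2 D p v = (\<Sum>j<p. normH1 D (v j))"
  unfolding H_norm2_def normH1_def ..

lemma H10_L2: "H10 D u \<Longrightarrow> L2 D u" by (simp add: H10_def)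

lemma H10_wpd:
  assumes "H10 D u" "b \<in> Basis"
  shows "L2 D (wpd D b u)" "weak_partial D u b (wpd D b u)"
proof -
  have "\<exists>g. L2 D g \<and> weak_partial D u b g" using assms unfolding H10_def by blast
  then have "L2 D (wpd D b u) \<and> weak_partial D u b (wpd D b u)" unfolding wpd_def by (rule someI_ex)
  then show "L2 D (wpd D b u)" "weak_partial D u b (wpd D b u)" by auto
qed

lemma H10_approx:
  assumes "H10 D u"
  obtains \<phi>s where "\<And>n. test_fun D (\<phi>s n)" "(\<lambda>n. L2_dist2 D (\<phi>s n) u) \<longlonglongrightarrow> 0"
    "\<And>b. b \<in> Basis \<Longrightarrow> (\<lambda>n. L2_dist2 D (dderiv b (\<phi>s n)) (wpd D b u)) \<longlonglongrightarrow> 0"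
  using assms unfolding H10_def by blast

lemma normH1_nonneg: "0 \<le> normH1 D u"
  unfolding normH1_def by (intro integral_nonneg_AE AE_I2) (auto intro!: add_nonneg_nonneg sum_nonneg)

lemma sq_split: "(cmod a)^2 \<le> 2 * (cmod (a - c))^2 + 2 * (cmod c)^2"
proof -
  have t: "cmod a \<le> cmod (a - c) + cmod c" by (metis diff_add_cancel norm_triangle_ineq)
  have "(cmod a)^2 \<le> (cmod (a - c) + cmod c)^2" using t by (simp add: power_mono)
  also have "\<dots> \<le> 2 * (cmod (a - c))^2 + 2 * (cmod c)^2"
  proof -
    have "0 \<le> (cmod (a - c) - cmod c)^2" by simp
    then show ?thesis by (simp add: power2_eq_square algebra_simps)
  qed
  finally show ?thesis .
qed

lemma H10_sob:
  fixes u :: "'a::euclidean_space \<Rightarrow> complex"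
  assumes dim: "DIM('a) = 2 \<or> DIM('a) = 3" and D: "open D" "bounded D" and u: "H10 D u"
  shows "integrable (lebesgue_on D) (\<lambda>x. (cmod (u x))^4)"
    and "(\<integral>x. (cmod (u x))^4 \<partial>lebesgue_on D) \<le> 8 * (normH1 D u)^2"
proof -
  let ?M = "lebesgue_on D"
  have uL2: "L2 D u" by (rule H10_L2[OF u])
  have wL2: "L2 D (wpd D b u)" if "b \<in> Basis" for b using H10_wpd[OF u that] by blast
  obtain \<phi>s where t: "\<And>n. test_fun D (\<phi>s n)" and c0: "(\<lambda>n. L2_dist2 D (\<phi>s n) u) \<longlonglongrightarrow> 0"
    and c1: "\<And>b. b \<in> Basis \<Longrightarrow> (\<lambda>n. L2_dist2 D (dderiv b (\<phi>s n)) (wpd D b u)) \<longlonglongrightarrow> 0"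
    using H10_approx[OF u] by blast
  define e where "e n = L2_dist2 D (\<phi>s n) u + (\<Sum>b\<in>Basis. L2_dist2 D (dderiv b (\<phi>s n)) (wpd D b u))" for n
  have e0: "e \<longlonglongrightarrow> 0" unfolding e_def
    by (intro tendsto_add_zero c0 tendsto_null_sum c1)
  define N where "N = normH1 D u"
  have N0: "0 \<le> N" unfolding N_def by (rule normH1_nonneg)
  have pL2: "L2 D (\<phi>s n)" for n by (rule test_L2[OF t D(2) D(1)])
  have dL2: "L2 D (dderiv b (\<phi>s n))" if "b \<in> Basis" for b n by (rule test_dL2[OF t D(2) D(1) that])
  have A: "(\<integral>\<^sup>+x. ennreal ((cmod (\<phi>s n x))^4) \<partial>?M) \<le> ennreal (2 * (2 * e n + 2 * N)^2)" for n
  proof -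
    define F where "F x = (cmod (\<phi>s n x - u x))^2 + (\<Sum>b\<in>Basis. (cmod (dderiv b (\<phi>s n) x - wpd D b u x))^2)" for x
    define H where "H x = (cmod (u x))^2 + (\<Sum>b\<in>Basis. (cmod (wpd D b u x))^2)" for x
    have iF1: "integrable ?M (\<lambda>x. (cmod (\<phi>s n x - u x))^2)" by (rule L2_int[OF L2_diff[OF pL2 uL2]])
    have iF2: "integrable ?M (\<lambda>x. (cmod (dderiv b (\<phi>s n) x - wpd D b u x))^2)" if "b \<in> Basis" for b
      by (rule L2_int[OF L2_diff[OF dL2[OF that] wL2[OF that]]])
    have iF: "integrable ?M F" unfolding F_def using iF1 iF2 by auto
    have iH: "integrable ?M H" unfolding H_def using L2_int[OF uL2] L2_int[OF wL2] by auto
    have intF: "(\<integral>x. F x \<partial>?M) = e n"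
      unfolding F_def e_def L2_dist2_def using iF1 iF2
      by (simp add: Bochner_Integration.integral_add integral_sum)
    have intH: "(\<integral>x. H x \<partial>?M) = N" unfolding H_def N_def normH1_def ..
    have le1: "(\<integral>\<^sup>+x. ennreal ((cmod (\<phi>s n x))^2 + (\<Sum>b\<in>Basis. (cmod (dderiv b (\<phi>s n) x))^2)) \<partial>?M)
        \<le> ennreal (2 * e n + 2 * N)"
    proof -
      have "(\<integral>\<^sup>+x. ennreal ((cmod (\<phi>s n x))^2 + (\<Sum>b\<in>Basis. (cmod (dderiv b (\<phi>s n) x))^2)) \<partial>?M)
          \<le> (\<integral>\<^sup>+x. ennreal (2 * F x + 2 * H x) \<partial>?M)"
      proof (intro nn_integral_mono ennreal_leI)
        fix x
        have "(cmod (\<phi>s n x))^2 + (\<Sum>b\<in>Basis. (cmod (dderiv b (\<phi>s n) x))^2)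
           \<le> (2 * (cmod (\<phi>s n x - u x))^2 + 2 * (cmod (u x))^2) +
              (\<Sum>b\<in>Basis. 2 * (cmod (dderiv b (\<phi>s n) x - wpd D b u x))^2 + 2 * (cmod (wpd D b u x))^2)"
          by (intro add_mono sq_split sum_mono)
        also have "\<dots> = 2 * F x + 2 * H x"
          unfolding F_def H_def by (simp add: sum.distrib sum_distrib_left algebra_simps)
        finally show "(cmod (\<phi>s n x))^2 + (\<Sum>b\<in>Basis. (cmod (dderiv b (\<phi>s n) x))^2) \<le> 2 * F x + 2 * H x" .
      qed
      also have "\<dots> = ennreal (\<integral>x. 2 * F x + 2 * H x \<partial>?M)"
      proof (rule nn_integral_eq_integral)
        show "integrable ?M (\<lambda>x. 2 * F x + 2 * H x)" using iF iH by auto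
        have "0 \<le> F x" "0 \<le> H x" for x unfolding F_def H_def by (auto intro!: add_nonneg_nonneg sum_nonneg)
        then show "AE x in ?M. 0 \<le> 2 * F x + 2 * H x" by (intro AE_I2) auto
      qed
      also have "(\<integral>x. 2 * F x + 2 * H x \<partial>?M) = 2 * e n + 2 * N"
        using iF iH intF intH by simp
      finally show ?thesis .
    qed
    have "(\<integral>\<^sup>+x. ennreal ((cmod (\<phi>s n x))^4) \<partial>?M) \<le>
           2 * (\<integral>\<^sup>+x. ennreal ((cmod (\<phi>s n x))^2 + (\<Sum>b\<in>Basis. (cmod (dderiv b (\<phi>s n) x))^2)) \<partial>?M)^2"
      by (rule sob_testD[OF dim D(1) t])
    also have "\<dots> \<le> 2 * (ennreal (2 * e n + 2 * N))^2"
      using le1 by (intro mult_left_mono power_mono) auto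
    also have "\<dots> = ennreal (2 * (2 * e n + 2 * N)^2)"
    proof -
      have "0 \<le> e n" unfolding e_def L2_dist2_def
        by (intro add_nonneg_nonneg sum_nonneg integral_nonneg_AE AE_I2) auto
      then have p: "0 \<le> 2 * e n + 2 * N" using N0 by simp
      have a: "(ennreal (2 * e n + 2 * N))^2 = ennreal ((2 * e n + 2 * N)^2)" by (rule ennreal_power[OF p])
      have b: "ennreal (2 * (2 * e n + 2 * N)^2) = ennreal 2 * ennreal ((2 * e n + 2 * N)^2)"
        by (rule ennreal_mult) auto
      show ?thesis unfolding a b by simp
    qed
    finally show ?thesis .
  qed
  
  have "\<exists>r::nat\<Rightarrow>nat. strict_mono r \<and> (AE x in ?M. (\<lambda>n. (cmod (\<phi>s (r n) x - u x))^2) \<longlonglongrightarrow> 0)"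
  proof (rule tendsto_L1_AE_subseq)
    show "integrable ?M (\<lambda>x. (cmod (\<phi>s n x - u x))^2)" for n by (rule L2_int[OF L2_diff[OF pL2 uL2]])
    show "(\<lambda>n. \<integral>x. norm ((cmod (\<phi>s n x - u x))^2) \<partial>?M) \<longlonglongrightarrow> 0"
      using c0 unfolding L2_dist2_def by simp
  qed
  then obtain r where r: "strict_mono r" and ae: "AE x in ?M. (\<lambda>n. (cmod (\<phi>s (r n) x - u x))^2) \<longlonglongrightarrow> 0"
    by blast
  have conv: "(\<lambda>n. ennreal ((cmod (\<phi>s (r n) x))^4)) \<longlonglongrightarrow> ennreal ((cmod (u x))^4)"
    if "(\<lambda>n. (cmod (\<phi>s (r n) x - u x))^2) \<longlonglongrightarrow> 0" for x
  proof -
    have "(\<lambda>n. sqrt ((cmod (\<phi>s (r n) x - u x))^2)) \<longlonglongrightarrow> sqrt 0"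
      using that by (rule tendsto_real_sqrt)
    then have "(\<lambda>n. cmod (\<phi>s (r n) x - u x)) \<longlonglongrightarrow> 0" by simp
    then have "(\<lambda>n. \<phi>s (r n) x - u x) \<longlonglongrightarrow> 0" by (simp add: tendsto_norm_zero_iff)
    then have "(\<lambda>n. (\<phi>s (r n) x - u x) + u x) \<longlonglongrightarrow> 0 + u x" by (intro tendsto_add tendsto_const)
    then have "(\<lambda>n. \<phi>s (r n) x) \<longlonglongrightarrow> u x" by simp
    then have "(\<lambda>n. (cmod (\<phi>s (r n) x))^4) \<longlonglongrightarrow> (cmod (u x))^4" by (intro tendsto_intros)
    then show ?thesis by (rule tendsto_ennrealI)
  qed
  have pm: "(\<lambda>x. ennreal ((cmod (\<phi>s n x))^4)) \<in> borel_measurable ?M" for n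
    using L2_meas[OF pL2] by measurable
  have "(\<integral>\<^sup>+x. ennreal ((cmod (u x))^4) \<partial>?M) = (\<integral>\<^sup>+x. liminf (\<lambda>n. ennreal ((cmod (\<phi>s (r n) x))^4)) \<partial>?M)"
  proof (rule nn_integral_cong_AE)
    show "AE x in ?M. ennreal ((cmod (u x))^4) = liminf (\<lambda>n. ennreal ((cmod (\<phi>s (r n) x))^4))"
      using ae by eventually_elim (use conv in \<open>auto intro!: lim_imp_Liminf[symmetric]\<close>)
  qed
  also have "\<dots> \<le> liminf (\<lambda>n. \<integral>\<^sup>+x. ennreal ((cmod (\<phi>s (r n) x))^4) \<partial>?M)"
    by (rule nn_integral_liminf) (rule pm)
  also have "\<dots> \<le> liminf (\<lambda>n. ennreal (2 * (2 * e (r n) + 2 * N)^2))"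
    by (intro Liminf_mono always_eventually allI A)
  also have "\<dots> = ennreal (2 * (2 * 0 + 2 * N)^2)"
  proof (rule lim_imp_Liminf)
    show "(\<lambda>n. ennreal (2 * (2 * e (r n) + 2 * N)^2)) \<longlonglongrightarrow> ennreal (2 * (2 * 0 + 2 * N)^2)"
    proof (intro tendsto_ennrealI tendsto_intros)
      show "(\<lambda>n. e (r n)) \<longlonglongrightarrow> 0" using LIMSEQ_subseq_LIMSEQ[OF e0 r] by (simp add: comp_def)
    qed
  qed simp
  also have "\<dots> = ennreal (8 * N^2)" by (simp add: power2_eq_square)
  finally have fin: "(\<integral>\<^sup>+x. ennreal ((cmod (u x))^4) \<partial>?M) \<le> ennreal (8 * N^2)" .
  have um: "(\<lambda>x. (cmod (u x))^4) \<in> borel_measurable ?M" using L2_meas[OF uL2] by measurable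
  show I: "integrable ?M (\<lambda>x. (cmod (u x))^4)"
  proof (subst integrable_iff_bounded, intro conjI um)
    have "(\<integral>\<^sup>+x. ennreal (norm ((cmod (u x))^4)) \<partial>?M) = (\<integral>\<^sup>+x. ennreal ((cmod (u x))^4) \<partial>?M)" by simp
    also have "\<dots> < \<infinity>" using fin by (simp add: le_less_trans)
    finally show "(\<integral>\<^sup>+x. ennreal (norm ((cmod (u x))^4)) \<partial>?M) < \<infinity>" .
  qed
  have "ennreal (\<integral>x. (cmod (u x))^4 \<partial>?M) = (\<integral>\<^sup>+x. ennreal ((cmod (u x))^4) \<partial>?M)"
    by (rule nn_integral_eq_integral[symmetric]) (use I in auto)
  with fin have "ennreal (\<integral>x. (cmod (u x))^4 \<partial>?M) \<le> ennreal (8 * N^2)" by simp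
  then show "(\<integral>x. (cmod (u x))^4 \<partial>?M) \<le> 8 * (normH1 D u)^2"
    unfolding N_def by (simp add: ennreal_le_iff)
qed


definition smooth_upto :: "nat \<Rightarrow> ('a::euclidean_space \<Rightarrow> complex) \<Rightarrow> bool" where
  "smooth_upto n f \<longleftrightarrow> (\<forall>bs. set bs \<subseteq> Basis \<longrightarrow> length bs \<le> n \<longrightarrow> (\<forall>x. fold dderiv bs f differentiable (at x)))"

lemma smooth_fun_upto: "smooth_fun f \<longleftrightarrow> (\<forall>n. smooth_upto n f)"
  unfolding smooth_fun_def smooth_upto_def by blast

lemma smooth_upto_0: "smooth_upto 0 f \<longleftrightarrow> (\<forall>x. f differentiable (at x))"
  unfolding smooth_upto_def by auto

lemma smooth_upto_Suc:
  "smooth_upto (Suc n) f \<longleftrightarrow> (\<forall>x. f differentiable (at x)) \<and> (\<forall>b\<in>Basis. smooth_upto n (dderiv b f))"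
proof
  assume a: "smooth_upto (Suc n) f"
  have "\<forall>x. f differentiable (at x)" using a unfolding smooth_upto_def
    by (metis empty_set empty_subsetI fold_Nil id_apply le0 list.size(3))
  moreover have "smooth_upto n (dderiv b f)" if b: "b \<in> Basis" for b
    unfolding smooth_upto_def
  proof (intro allI impI)
    fix bs :: "'a list" and x assume "set bs \<subseteq> Basis" "length bs \<le> n"
    then have "set (b#bs) \<subseteq> Basis" "length (b#bs) \<le> Suc n" using b by auto
    then have "fold dderiv (b#bs) f differentiable (at x)" using a unfolding smooth_upto_def by blast
    then show "fold dderiv bs (dderiv b f) differentiable (at x)" by simp
  qed
  ultimately show "(\<forall>x. f differentiable (at x)) \<and> (\<forall>b\<in>Basis. smooth_upto n (dderiv b f))" by blast
next
  assume a: "(\<forall>x. f differentiable (at x)) \<and> (\<forall>b\<in>Basis. smooth_upto n (dderiv b f))"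
  show "smooth_upto (Suc n) f" unfolding smooth_upto_def
  proof (intro allI impI)
    fix bs :: "'a list" and x assume bs: "set bs \<subseteq> Basis" "length bs \<le> Suc n"
    show "fold dderiv bs f differentiable (at x)"
    proof (cases bs)
      case Nil then show ?thesis using a by simp
    next
      case (Cons b cs)
      then have "b \<in> Basis" "set cs \<subseteq> Basis" "length cs \<le> n" using bs by auto
      then have "fold dderiv cs (dderiv b f) differentiable (at x)" using a unfolding smooth_upto_def by blast
      then show ?thesis using Cons by simp
    qed
  qed
qed

lemma smooth_upto_mono: "smooth_upto (Suc n) f \<Longrightarrow> smooth_upto n f"
  unfolding smooth_upto_def by auto

lemma smooth_upto_diff: "smooth_upto n f \<Longrightarrow> f differentiable (at x)"
  by (cases n) (auto simp: smooth_upto_Suc smooth_upto_0)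

lemma dd_eq: "(f has_derivative f') (at x) \<Longrightarrow> dderiv b f x = f' b"
  unfolding dderiv_def using frechet_derivative_at by metis

lemma dd_add:
  assumes "\<And>x. f differentiable (at x)" "\<And>x. g differentiable (at x)"
  shows "dderiv b (\<lambda>y. f y + g y) = (\<lambda>x. dderiv b f x + dderiv b g x)"
proof
  fix x
  have df: "(f has_derivative frechet_derivative f (at x)) (at x)" using assms(1) frechet_derivative_works by blast
  have dg: "(g has_derivative frechet_derivative g (at x)) (at x)" using assms(2) frechet_derivative_works by blast
  show "dderiv b (\<lambda>y. f y + g y) x = dderiv b f x + dderiv b g x"
    using dd_eq[OF has_derivative_add[OF df dg]] unfolding dderiv_def by simp
qed

lemma dd_mult:
  assumes "\<And>x. f differentiable (at x)" "\<And>x. g differentiable (at x)"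
  shows "dderiv b (\<lambda>y. f y * g y) = (\<lambda>x. dderiv b f x * g x + f x * dderiv b g x)"
proof
  fix x
  have df: "(f has_derivative frechet_derivative f (at x)) (at x)" using assms(1) frechet_derivative_works by blast
  have dg: "(g has_derivative frechet_derivative g (at x)) (at x)" using assms(2) frechet_derivative_works by blast
  show "dderiv b (\<lambda>y. f y * g y) x = dderiv b f x * g x + f x * dderiv b g x"
    using dd_eq[OF has_derivative_mult[OF df dg]] unfolding dderiv_def by (simp add: algebra_simps)
qed

lemma dd_cnj:
  assumes "\<And>x. f differentiable (at x)"
  shows "dderiv b (\<lambda>y. cnj (f y)) = (\<lambda>x. cnj (dderiv b f x))"
proof
  fix x
  have df: "(f has_derivative frechet_derivative f (at x)) (at x)" using assms(1) frechet_derivative_works by blast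
  show "dderiv b (\<lambda>y. cnj (f y)) x = cnj (dderiv b f x)"
    using dd_eq[OF has_derivative_cnj[OF df]] unfolding dderiv_def by simp
qed

lemma dd_coord: "dderiv b (\<lambda>y. complex_of_real (y \<bullet> e)) = (\<lambda>x. complex_of_real (b \<bullet> e))"
proof
  fix x
  have "((\<lambda>y. complex_of_real (y \<bullet> e)) has_derivative (\<lambda>h. complex_of_real (h \<bullet> e))) (at x)"
    by (auto intro!: derivative_eq_intros)
  from dd_eq[OF this] show "dderiv b (\<lambda>y. complex_of_real (y \<bullet> e)) x = complex_of_real (b \<bullet> e)" .
qed

lemma dd_const: "dderiv b (\<lambda>y::'a::euclidean_space. c::complex) = (\<lambda>x. 0)"
proof
  fix x
  have "((\<lambda>y::'a. c) has_derivative (\<lambda>h. 0)) (at x)" by simp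
  from dd_eq[OF this] show "dderiv b (\<lambda>y. c) x = 0" .
qed

lemma smooth_const: "smooth_upto n (\<lambda>y. c)"
proof (induction n arbitrary: c)
  case 0 then show ?case by (simp add: smooth_upto_0)
next
  case (Suc n) then show ?case by (simp add: smooth_upto_Suc dd_const)
qed

lemma coord_diff: "(\<lambda>y. complex_of_real (y \<bullet> e)) differentiable (at x)"
proof -
  have "((\<lambda>y. complex_of_real (y \<bullet> e)) has_derivative (\<lambda>h. complex_of_real (h \<bullet> e))) (at x)"
    by (auto intro!: derivative_eq_intros)
  then show ?thesis by (rule differentiableI)
qed

lemma smooth_coord: "smooth_upto n (\<lambda>y. complex_of_real (y \<bullet> e))"
proof (cases n)
  case 0 then show ?thesis by (simp add: smooth_upto_0 coord_diff)
next
  case (Suc m)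
  have "\<forall>x. (\<lambda>y. complex_of_real (y \<bullet> e)) differentiable (at x)"
    by (simp add: coord_diff)
  then show ?thesis unfolding Suc smooth_upto_Suc by (simp add: dd_coord smooth_const)
qed

lemma smooth_add: "smooth_upto n f \<Longrightarrow> smooth_upto n g \<Longrightarrow> smooth_upto n (\<lambda>y. f y + g y)"
proof (induction n arbitrary: f g)
  case 0 then show ?case by (auto simp: smooth_upto_0)
next
  case (Suc n)
  have df: "\<And>x. f differentiable (at x)" and dg: "\<And>x. g differentiable (at x)"
    using Suc.prems by (auto simp: smooth_upto_Suc)
  show ?case unfolding smooth_upto_Suc
  proof (intro conjI ballI allI)
    fix x show "(\<lambda>y. f y + g y) differentiable (at x)" using df dg by auto
  next
    fix b :: 'a assume b: "b \<in> Basis"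
    show "smooth_upto n (dderiv b (\<lambda>y. f y + g y))"
      unfolding dd_add[OF df dg] using Suc.IH Suc.prems b by (auto simp: smooth_upto_Suc)
  qed
qed

lemma smooth_mult: "smooth_upto n f \<Longrightarrow> smooth_upto n g \<Longrightarrow> smooth_upto n (\<lambda>y. f y * g y)"
proof (induction n arbitrary: f g)
  case 0 then show ?case by (auto simp: smooth_upto_0)
next
  case (Suc n)
  have df: "\<And>x. f differentiable (at x)" and dg: "\<And>x. g differentiable (at x)"
    using Suc.prems by (auto simp: smooth_upto_Suc)
  show ?case unfolding smooth_upto_Suc
  proof (intro conjI ballI allI)
    fix x show "(\<lambda>y. f y * g y) differentiable (at x)" using df dg by auto
  next
    fix b :: 'a assume b: "b \<in> Basis"
    have "smooth_upto n (dderiv b f)" "smooth_upto n (dderiv b g)"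
      using Suc.prems b by (auto simp: smooth_upto_Suc)
    moreover have "smooth_upto n f" "smooth_upto n g" using Suc.prems by (auto intro: smooth_upto_mono)
    ultimately show "smooth_upto n (dderiv b (\<lambda>y. f y * g y))"
      unfolding dd_mult[OF df dg] by (intro smooth_add Suc.IH)
  qed
qed

lemma smooth_cnj: "smooth_upto n f \<Longrightarrow> smooth_upto n (\<lambda>y. cnj (f y))"
proof (induction n arbitrary: f)
  case 0 then show ?case by (auto simp: smooth_upto_0 simp: differentiable_cnj_iff)
next
  case (Suc n)
  have df: "\<And>x. f differentiable (at x)" using Suc.prems by (auto simp: smooth_upto_Suc)
  show ?case unfolding smooth_upto_Suc
  proof (intro conjI ballI allI)
    fix x show "(\<lambda>y. cnj (f y)) differentiable (at x)" using df by (auto simp: differentiable_cnj_iff)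
  next
    fix b :: 'a assume b: "b \<in> Basis"
    show "smooth_upto n (dderiv b (\<lambda>y. cnj (f y)))"
      unfolding dd_cnj[OF df] using Suc.IH Suc.prems b by (auto simp: smooth_upto_Suc)
  qed
qed

lemma test_coord_cnj:
  assumes t: "test_fun D \<psi>"
  shows "test_fun D (\<lambda>x. complex_of_real (x \<bullet> e) * cnj (\<psi> x))"
proof -
  have s: "smooth_upto n \<psi>" for n using t unfolding test_fun_def smooth_fun_upto by blast
  have sm: "smooth_fun (\<lambda>x. complex_of_real (x \<bullet> e) * cnj (\<psi> x))"
    unfolding smooth_fun_upto by (intro allI smooth_mult smooth_coord smooth_cnj s)
  have sub: "closure {x. complex_of_real (x \<bullet> e) * cnj (\<psi> x) \<noteq> 0} \<subseteq> closure {x. \<psi> x \<noteq> 0}"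
    by (intro closure_mono) auto
  have "compact (closure {x. \<psi> x \<noteq> 0} \<inter> closure {x. complex_of_real (x \<bullet> e) * cnj (\<psi> x) \<noteq> 0})"
    using t unfolding test_fun_def by (intro compact_Int_closed) auto
  moreover have "closure {x. \<psi> x \<noteq> 0} \<inter> closure {x. complex_of_real (x \<bullet> e) * cnj (\<psi> x) \<noteq> 0} =
      closure {x. complex_of_real (x \<bullet> e) * cnj (\<psi> x) \<noteq> 0}" using sub by blast
  ultimately show ?thesis using sm sub t unfolding test_fun_def by auto
qed

lemma dd_coord_cnj:
  assumes t: "test_fun D \<psi>" and e: "e \<in> Basis" "b \<in> Basis" "e \<noteq> b"
  shows "dderiv b (\<lambda>x. complex_of_real (x \<bullet> e) * cnj (\<psi> x)) x = complex_of_real (x \<bullet> e) * cnj (dderiv b \<psi> x)"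
proof -
  have d1: "\<And>x. (\<lambda>y. complex_of_real (y \<bullet> e)) differentiable (at x)" by (rule coord_diff)
  have d2: "\<And>x. (\<lambda>y. cnj (\<psi> y)) differentiable (at x)" using test_diff[OF t] by (auto simp: differentiable_cnj_iff)
  have "b \<bullet> e = 0" using e by (simp add: inner_Basis)
  then show ?thesis
    unfolding dd_mult[OF d1 d2] dd_coord dd_cnj[OF test_diff[OF t]] by simp
qed


lemma L2_mult_bounded_AE:
  assumes "L2 D f" and hm: "h \<in> borel_measurable (lebesgue_on D)" and hb: "AE x in lebesgue_on D. cmod (h x) \<le> B"
  shows "L2 D (\<lambda>x. h x * f x)"
  unfolding L2_def
proof
  show m: "(\<lambda>x. h x * f x) \<in> borel_measurable (lebesgue_on D)"
    using L2_meas[OF assms(1)] hm by measurable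
  show "integrable (lebesgue_on D) (\<lambda>x. (cmod (h x * f x))^2)"
  proof (rule Bochner_Integration.integrable_bound[where f="\<lambda>x. B^2 * (cmod (f x))^2"])
    show "integrable (lebesgue_on D) (\<lambda>x. B^2 * (cmod (f x))^2)"
      using L2_int[OF assms(1)] by auto
    show "(\<lambda>x. (cmod (h x * f x))^2) \<in> borel_measurable (lebesgue_on D)" using m by measurable
    show "AE x in lebesgue_on D. norm ((cmod (h x * f x))^2) \<le> norm (B^2 * (cmod (f x))^2)"
      using hb
    proof eventually_elim
      case (elim x)
      have "(cmod (h x * f x))^2 = (cmod (h x))^2 * (cmod (f x))^2" by (simp add: norm_mult power_mult_distrib)
      also have "\<dots> \<le> B^2 * (cmod (f x))^2"
        using elim by (intro mult_right_mono power_mono) auto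
      finally show ?case by simp
    qed
  qed
qed

lemma coord_meas: "(\<lambda>x. complex_of_real (x \<bullet> e)) \<in> borel_measurable (lebesgue_on D)"
  if "open D" for D :: "'a::euclidean_space set"
  by (rule continuous_imp_measurable_on_sets_lebesgue) (use that in \<open>auto intro!: continuous_intros\<close>)

lemma coord_bound:
  assumes "bounded D" "e \<in> Basis"
  obtains R where "0 \<le> R" "\<And>x. x \<in> D \<Longrightarrow> cmod (complex_of_real (x \<bullet> e)) \<le> R"
proof -
  obtain R where R: "\<forall>x\<in>D. norm x \<le> R" using assms(1) unfolding bounded_iff by blast
  have "cmod (complex_of_real (x \<bullet> e)) \<le> \<bar>R\<bar>" if "x \<in> D" for x
  proof -
    have "\<bar>x \<bullet> e\<bar> \<le> norm x" using assms(2) by (rule Basis_le_norm)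
    then show ?thesis using R that by fastforce
  qed
  then show ?thesis using that[of "\<bar>R\<bar>"] by simp
qed

lemma L2_coord_mult:
  assumes "open D" "bounded D" "e \<in> Basis" "L2 D f"
  shows "L2 D (\<lambda>x. complex_of_real (x \<bullet> e) * f x)"
proof -
  obtain R where "\<And>x. x \<in> D \<Longrightarrow> cmod (complex_of_real (x \<bullet> e)) \<le> R" using coord_bound[OF assms(2,3)] by blast
  then show ?thesis by (intro L2_mult_bounded[OF assms(4) coord_meas[OF assms(1)]])
qed

lemma conv_L2:
  assumes h: "L2 D h" and f: "L2 D f" and fs: "\<And>n. L2 D (fs n)"
    and c: "(\<lambda>n. L2_dist2 D (fs n) f) \<longlonglongrightarrow> 0"
  shows "(\<lambda>n. \<integral>x. h x * cnj (fs n x) \<partial>lebesgue_on D) \<longlonglongrightarrow> (\<integral>x. h x * cnj (f x) \<partial>lebesgue_on D)"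
proof (rule LIM_zero_cancel, rule Lim_null_comparison)
  let ?M = "lebesgue_on D"
  let ?g = "\<lambda>n. sqrt (\<integral>x. (cmod (h x))^2 \<partial>?M) * sqrt (L2_dist2 D (fs n) f)"
  show "\<forall>\<^sub>F n in sequentially. norm ((\<integral>x. h x * cnj (fs n x) \<partial>?M) - (\<integral>x. h x * cnj (f x) \<partial>?M)) \<le> ?g n"
  proof (intro always_eventually allI)
    fix n
    have d: "L2 D (\<lambda>x. cnj (fs n x - f x))" by (intro L2_cnj L2_diff fs f)
    have "(\<integral>x. h x * cnj (fs n x) \<partial>?M) - (\<integral>x. h x * cnj (f x) \<partial>?M) = (\<integral>x. h x * cnj (fs n x) - h x * cnj (f x) \<partial>?M)"
      by (rule Bochner_Integration.integral_diff[symmetric, OF L2_prod[OF h L2_cnj[OF fs]] L2_prod[OF h L2_cnj[OF f]]])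
    also have "\<dots> = (\<integral>x. h x * cnj (fs n x - f x) \<partial>?M)"
      by (simp only: complex_cnj_diff right_diff_distrib)
    also have "norm \<dots> \<le> sqrt (\<integral>x. (cmod (h x))^2 \<partial>?M) * sqrt (\<integral>x. (cmod (cnj (fs n x - f x)))^2 \<partial>?M)"
      by (rule L2_norm_int_bound[OF h d])
    also have "\<dots> = ?g n" unfolding L2_dist2_def by (simp only: complex_mod_cnj)
    finally show "norm ((\<integral>x. h x * cnj (fs n x) \<partial>?M) - (\<integral>x. h x * cnj (f x) \<partial>?M)) \<le> ?g n" .
  qed
  show "?g \<longlonglongrightarrow> 0"
    using tendsto_mult_left[OF tendsto_real_sqrt[OF c], of "sqrt (\<integral>x. (cmod (h x))^2 \<partial>?M)"] by simp
qed

lemma IBP: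
  fixes v w :: "'a::euclidean_space \<Rightarrow> complex"
  assumes D: "open D" "bounded D" and eb: "e \<in> Basis" "b \<in> Basis" "e \<noteq> b"
    and v: "H10 D v" and w: "H10 D w"
  shows "(\<integral>x. complex_of_real (x \<bullet> e) * cnj (w x) * wpd D b v x \<partial>lebesgue_on D) =
         - (\<integral>x. complex_of_real (x \<bullet> e) * v x * cnj (wpd D b w x) \<partial>lebesgue_on D)"
proof -
  let ?M = "lebesgue_on D"
  let ?X = "\<lambda>x. complex_of_real (x \<bullet> e)"
  obtain \<phi>s where t: "\<And>n. test_fun D (\<phi>s n)" and c0: "(\<lambda>n. L2_dist2 D (\<phi>s n) w) \<longlonglongrightarrow> 0"
    and c1: "\<And>b. b \<in> Basis \<Longrightarrow> (\<lambda>n. L2_dist2 D (dderiv b (\<phi>s n)) (wpd D b w)) \<longlonglongrightarrow> 0"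
    using H10_approx[OF w] by blast
  define g where "g = wpd D b v"
  have wp: "weak_partial D v b g" unfolding g_def by (rule H10_wpd(2)[OF v eb(2)])
  have gL2: "L2 D g" unfolding g_def by (rule H10_wpd(1)[OF v eb(2)])
  have vL2: "L2 D v" by (rule H10_L2[OF v])
  have wL2: "L2 D w" by (rule H10_L2[OF w])
  have wbL2: "L2 D (wpd D b w)" by (rule H10_wpd(1)[OF w eb(2)])
  define h1 where "h1 x = ?X x * v x" for x
  define h2 where "h2 x = ?X x * g x" for x
  have h1L2: "L2 D h1" unfolding h1_def by (rule L2_coord_mult[OF D eb(1) vL2])
  have h2L2: "L2 D h2" unfolding h2_def by (rule L2_coord_mult[OF D eb(1) gL2])
  have eqn: "(\<integral>x. h1 x * cnj (dderiv b (\<phi>s n) x) \<partial>?M) = - (\<integral>x. h2 x * cnj (\<phi>s n x) \<partial>?M)" for n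
  proof -
    have tc: "test_fun D (\<lambda>x. ?X x * cnj (\<phi>s n x))" by (rule test_coord_cnj[OF t])
    have "(\<integral>x. v x * dderiv b (\<lambda>x. ?X x * cnj (\<phi>s n x)) x \<partial>?M) = - (\<integral>x. g x * (?X x * cnj (\<phi>s n x)) \<partial>?M)"
      using wp tc unfolding weak_partial_def by blast
    moreover have "(\<integral>x. v x * dderiv b (\<lambda>x. ?X x * cnj (\<phi>s n x)) x \<partial>?M) = (\<integral>x. h1 x * cnj (dderiv b (\<phi>s n) x) \<partial>?M)"
      unfolding h1_def by (intro Bochner_Integration.integral_cong refl) (simp add: dd_coord_cnj[OF t eb])
    moreover have "(\<integral>x. g x * (?X x * cnj (\<phi>s n x)) \<partial>?M) = (\<integral>x. h2 x * cnj (\<phi>s n x) \<partial>?M)"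
      unfolding h2_def by (simp add: mult_ac)
    ultimately show ?thesis by simp
  qed
  have L: "(\<lambda>n. \<integral>x. h1 x * cnj (dderiv b (\<phi>s n) x) \<partial>?M) \<longlonglongrightarrow> (\<integral>x. h1 x * cnj (wpd D b w x) \<partial>?M)"
    by (rule conv_L2[OF h1L2 wbL2 test_dL2[OF t D(2) D(1) eb(2)] c1[OF eb(2)]])
  have R: "(\<lambda>n. \<integral>x. h2 x * cnj (\<phi>s n x) \<partial>?M) \<longlonglongrightarrow> (\<integral>x. h2 x * cnj (w x) \<partial>?M)"
    by (rule conv_L2[OF h2L2 wL2 test_L2[OF t D(2) D(1)] c0])
  have "(\<lambda>n. \<integral>x. h1 x * cnj (dderiv b (\<phi>s n) x) \<partial>?M) \<longlonglongrightarrow> - (\<integral>x. h2 x * cnj (w x) \<partial>?M)"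
    unfolding eqn by (rule tendsto_minus[OF R])
  with L have lim: "(\<integral>x. h1 x * cnj (wpd D b w x) \<partial>?M) = - (\<integral>x. h2 x * cnj (w x) \<partial>?M)"
    by (rule LIMSEQ_unique)
  have "(\<integral>x. ?X x * cnj (w x) * wpd D b v x \<partial>?M) = (\<integral>x. h2 x * cnj (w x) \<partial>?M)"
    unfolding h2_def g_def by (simp add: mult_ac)
  also have "\<dots> = - (\<integral>x. h1 x * cnj (wpd D b w x) \<partial>?M)" using lim by simp
  also have "(\<integral>x. h1 x * cnj (wpd D b w x) \<partial>?M) = (\<integral>x. ?X x * v x * cnj (wpd D b w x) \<partial>?M)"
    unfolding h1_def ..
  finally show ?thesis .
qed


lemma L2_add:
  assumes "L2 D f" "L2 D g"
  shows "L2 D (\<lambda>x. f x + g x)"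
proof -
  have "L2 D (\<lambda>x. f x - (- g x))"
    by (rule L2_diff[OF assms(1)]) (use assms(2) in \<open>simp add: L2_def\<close>)
  then show ?thesis by simp
qed

lemma L2_const_mult:
  assumes "L2 D f" shows "L2 D (\<lambda>x. c * f x)"
  by (rule L2_mult_bounded[OF assms, where B="cmod c"]) auto

lemma L2_sq_le_normH1:
  assumes "H10 D u"
  shows "(\<integral>x. (cmod (u x))^2 \<partial>lebesgue_on D) \<le> normH1 D u"
    and "b \<in> Basis \<Longrightarrow> (\<integral>x. (cmod (wpd D b u x))^2 \<partial>lebesgue_on D) \<le> normH1 D u"
proof -
  have iu: "integrable (lebesgue_on D) (\<lambda>x. (cmod (u x))^2)" by (rule L2_int[OF H10_L2[OF assms]])
  have iw: "integrable (lebesgue_on D) (\<lambda>x. (cmod (wpd D b u x))^2)" if "b \<in> Basis" for b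
    by (rule L2_int[OF H10_wpd(1)[OF assms that]])
  have iN: "integrable (lebesgue_on D) (\<lambda>x. (cmod (u x))\<^sup>2 + (\<Sum>b\<in>Basis. (cmod (wpd D b u x))\<^sup>2))"
    using iu iw by auto
  show "(\<integral>x. (cmod (u x))^2 \<partial>lebesgue_on D) \<le> normH1 D u"
    unfolding normH1_def by (intro integral_mono iu iN) (auto intro: sum_nonneg)
  assume b: "b \<in> Basis"
  show "(\<integral>x. (cmod (wpd D b u x))^2 \<partial>lebesgue_on D) \<le> normH1 D u"
    unfolding normH1_def
  proof (intro integral_mono iw[OF b] iN)
    fix x
    have "(cmod (wpd D b u x))^2 \<le> (\<Sum>b\<in>Basis. (cmod (wpd D b u x))\<^sup>2)"
      by (rule member_le_sum) (use b in auto)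
    then show "(cmod (wpd D b u x))^2 \<le> (cmod (u x))\<^sup>2 + (\<Sum>b\<in>Basis. (cmod (wpd D b u x))\<^sup>2)"
      by (simp add: add_increasing)
  qed
qed

lemma bound_CS:
  assumes "L2 D f" "L2 D g" "(\<integral>x. (cmod (f x))^2 \<partial>lebesgue_on D) \<le> A" "(\<integral>x. (cmod (g x))^2 \<partial>lebesgue_on D) \<le> B"
  shows "cmod (\<integral>x. f x * g x \<partial>lebesgue_on D) \<le> sqrt A * sqrt B"
proof -
  have "cmod (\<integral>x. f x * g x \<partial>lebesgue_on D) \<le>
           sqrt (\<integral>x. (cmod (f x))^2 \<partial>lebesgue_on D) * sqrt (\<integral>x. (cmod (g x))^2 \<partial>lebesgue_on D)"
    by (rule L2_norm_int_bound[OF assms(1,2)])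
  also have "\<dots> \<le> sqrt A * sqrt B"
  proof -
    have "0 \<le> (\<integral>x. (cmod (g x))^2 \<partial>lebesgue_on D)" by (intro integral_nonneg_AE AE_I2) simp
    then have "0 \<le> B" using assms(4) by linarith
    have "0 \<le> (\<integral>x. (cmod (f x))^2 \<partial>lebesgue_on D)" by (intro integral_nonneg_AE AE_I2) simp
    then have "0 \<le> A" using assms(3) by linarith
    then show ?thesis using assms(3,4) by (intro mult_mono real_sqrt_le_mono) auto
  qed
  finally show ?thesis .
qed

lemma rho_term:
  fixes \<phi> f g :: "'a::euclidean_space \<Rightarrow> complex"
  assumes dim: "DIM('a) = 2 \<or> DIM('a) = 3" and D: "open D" "bounded D"
    and H: "H10 D \<phi>" "H10 D f" "H10 D g"
  shows "integrable (lebesgue_on D) (\<lambda>x. complex_of_real ((cmod (\<phi> x))^2) * f x * cnj (g x))"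
    and "(\<integral>x. (cmod (\<phi> x))^2 * (cmod (f x) * cmod (g x)) \<partial>lebesgue_on D) \<le> 8 * normH1 D \<phi> * sqrt (normH1 D f) * sqrt (normH1 D g)"
proof -
  let ?M = "lebesgue_on D"
  have m\<phi>: "\<phi> \<in> borel_measurable ?M" by (rule L2_meas[OF H10_L2[OF H(1)]])
  have mf: "f \<in> borel_measurable ?M" by (rule L2_meas[OF H10_L2[OF H(2)]])
  have mg: "g \<in> borel_measurable ?M" by (rule L2_meas[OF H10_L2[OF H(3)]])
  note sp = H10_sob[OF dim D(1) D(2) H(1)] and sf = H10_sob[OF dim D(1) D(2) H(2)] and sg = H10_sob[OF dim D(1) D(2) H(3)]
  have m1: "(\<lambda>x. (cmod (\<phi> x))^2) \<in> borel_measurable ?M" using m\<phi> by measurable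
  have m2: "(\<lambda>x. cmod (f x) * cmod (g x)) \<in> borel_measurable ?M" using mf mg by measurable
  have i1: "integrable ?M (\<lambda>x. ((cmod (\<phi> x))^2)^2)" using sp(1) by (simp add: power_mult[symmetric])
  have i2: "integrable ?M (\<lambda>x. (cmod (f x) * cmod (g x))^2)"
  proof (rule Bochner_Integration.integrable_bound[where f="\<lambda>x. ((cmod (f x))^4 + (cmod (g x))^4) / 2"])
    show "integrable ?M (\<lambda>x. ((cmod (f x))^4 + (cmod (g x))^4) / 2)" using sf(1) sg(1) by auto
    show "(\<lambda>x. (cmod (f x) * cmod (g x))^2) \<in> borel_measurable ?M" using m2 by measurable
    show "AE x in ?M. norm ((cmod (f x) * cmod (g x))^2) \<le> norm (((cmod (f x))^4 + (cmod (g x))^4) / 2)"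
    proof (intro AE_I2)
      fix x
      have "0 \<le> ((cmod (f x))^2 - (cmod (g x))^2)^2" by simp
      then have "(cmod (f x) * cmod (g x))^2 \<le> ((cmod (f x))^4 + (cmod (g x))^4) / 2"
        by (simp add: power2_eq_square power4_eq_xxxx algebra_simps)
      then show "norm ((cmod (f x) * cmod (g x))^2) \<le> norm (((cmod (f x))^4 + (cmod (g x))^4) / 2)" by simp
    qed
  qed
  have cs1: "integrable ?M (\<lambda>x. (cmod (\<phi> x))^2 * (cmod (f x) * cmod (g x)))"
    by (rule CS_real(1)[OF m1 m2 i1 i2])
  show "integrable ?M (\<lambda>x. complex_of_real ((cmod (\<phi> x))^2) * f x * cnj (g x))"
  proof (rule Bochner_Integration.integrable_bound[OF cs1])
    show "(\<lambda>x. complex_of_real ((cmod (\<phi> x))^2) * f x * cnj (g x)) \<in> borel_measurable ?M"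
      using m\<phi> mf mg by measurable
    show "AE x in ?M. norm (complex_of_real ((cmod (\<phi> x))^2) * f x * cnj (g x)) \<le> norm ((cmod (\<phi> x))^2 * (cmod (f x) * cmod (g x)))"
      by (intro AE_I2) (simp add: norm_mult norm_power)
  qed
  have c1: "(\<integral>x. \<bar>(cmod (\<phi> x))^2 * (cmod (f x) * cmod (g x))\<bar> \<partial>?M) \<le>
      sqrt (\<integral>x. ((cmod (\<phi> x))^2)^2 \<partial>?M) * sqrt (\<integral>x. (cmod (f x) * cmod (g x))^2 \<partial>?M)"
    by (rule CS_real(2)[OF m1 m2 i1 i2])
  have mf2: "(\<lambda>x. (cmod (f x))^2) \<in> borel_measurable ?M" using mf by measurable
  have mg2: "(\<lambda>x. (cmod (g x))^2) \<in> borel_measurable ?M" using mg by measurable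
  have if4: "integrable ?M (\<lambda>x. ((cmod (f x))^2)^2)" using sf(1) by (simp add: power_mult[symmetric])
  have ig4: "integrable ?M (\<lambda>x. ((cmod (g x))^2)^2)" using sg(1) by (simp add: power_mult[symmetric])
  have c2: "(\<integral>x. \<bar>(cmod (f x))^2 * (cmod (g x))^2\<bar> \<partial>?M) \<le>
      sqrt (\<integral>x. ((cmod (f x))^2)^2 \<partial>?M) * sqrt (\<integral>x. ((cmod (g x))^2)^2 \<partial>?M)"
    by (rule CS_real(2)[OF mf2 mg2 if4 ig4])
  define Np where "Np = normH1 D \<phi>"
  define Nf where "Nf = normH1 D f"
  define Ng where "Ng = normH1 D g"
  have Np0: "0 \<le> Np" "0 \<le> Nf" "0 \<le> Ng" unfolding Np_def Nf_def Ng_def by (simp_all add: normH1_nonneg)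
  have e4: "(\<integral>x. ((cmod (h x))^2)^2 \<partial>?M) = (\<integral>x. (cmod (h x))^4 \<partial>?M)" for h :: "'a \<Rightarrow> complex"
    by (simp add: power_mult[symmetric])
  have sq8: "sqrt (8 * N^2) = sqrt 8 * N" if "0 \<le> N" for N :: real
    using that by (simp add: real_sqrt_mult)
  have "(\<integral>x. (cmod (f x) * cmod (g x))^2 \<partial>?M) = (\<integral>x. \<bar>(cmod (f x))^2 * (cmod (g x))^2\<bar> \<partial>?M)"
    by (simp add: power_mult_distrib)
  also have "\<dots> \<le> sqrt (8 * Nf^2) * sqrt (8 * Ng^2)"
  proof -
    have "sqrt (\<integral>x. ((cmod (f x))^2)^2 \<partial>?M) \<le> sqrt (8 * Nf^2)"
      unfolding e4 Nf_def by (rule real_sqrt_le_mono[OF sf(2)])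
    moreover have "sqrt (\<integral>x. ((cmod (g x))^2)^2 \<partial>?M) \<le> sqrt (8 * Ng^2)"
      unfolding e4 Ng_def by (rule real_sqrt_le_mono[OF sg(2)])
    ultimately have "sqrt (\<integral>x. ((cmod (f x))^2)^2 \<partial>?M) * sqrt (\<integral>x. ((cmod (g x))^2)^2 \<partial>?M) \<le> sqrt (8 * Nf^2) * sqrt (8 * Ng^2)"
      by (intro mult_mono) auto
    then show ?thesis using c2 by linarith
  qed
  also have "\<dots> = 8 * Nf * Ng" using Np0 by (simp add: sq8)
  finally have fg: "(\<integral>x. (cmod (f x) * cmod (g x))^2 \<partial>?M) \<le> 8 * Nf * Ng" .
  have "(\<integral>x. (cmod (\<phi> x))^2 * (cmod (f x) * cmod (g x)) \<partial>?M) =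
        (\<integral>x. \<bar>(cmod (\<phi> x))^2 * (cmod (f x) * cmod (g x))\<bar> \<partial>?M)" by simp
  also have "\<dots> \<le> sqrt (8 * Np^2) * sqrt (8 * Nf * Ng)"
  proof -
    have "sqrt (\<integral>x. ((cmod (\<phi> x))^2)^2 \<partial>?M) \<le> sqrt (8 * Np^2)"
      unfolding e4 Np_def by (rule real_sqrt_le_mono[OF sp(2)])
    moreover have "sqrt (\<integral>x. (cmod (f x) * cmod (g x))^2 \<partial>?M) \<le> sqrt (8 * Nf * Ng)"
      by (rule real_sqrt_le_mono[OF fg])
    ultimately have "sqrt (\<integral>x. ((cmod (\<phi> x))^2)^2 \<partial>?M) * sqrt (\<integral>x. (cmod (f x) * cmod (g x))^2 \<partial>?M) \<le> sqrt (8 * Np^2) * sqrt (8 * Nf * Ng)"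
      by (intro mult_mono) auto
    then show ?thesis using c1 by linarith
  qed
  also have "\<dots> = 8 * Np * sqrt Nf * sqrt Ng"
    using Np0 by (simp add: sq8 real_sqrt_mult)
  finally show "(\<integral>x. (cmod (\<phi> x))^2 * (cmod (f x) * cmod (g x)) \<partial>?M) \<le> 8 * normH1 D \<phi> * sqrt (normH1 D f) * sqrt (normH1 D g)"
    unfolding Np_def Nf_def Ng_def .
qed


lemma Rvec_inner:
  assumes "e1 \<in> Basis" "e2 \<in> Basis" "e1 \<noteq> e2" "b \<in> Basis"
  shows "Rvec e1 e2 x \<bullet> b = (if b = e1 then x \<bullet> e2 else if b = e2 then - (x \<bullet> e1) else 0)"
  using assms by (auto simp: Rvec_def inner_diff_left inner_Basis)

lemma sum_two:
  assumes "e1 \<in> Basis" "e2 \<in> Basis" "e1 \<noteq> e2" "\<And>b. b \<in> Basis \<Longrightarrow> b \<noteq> e1 \<Longrightarrow> b \<noteq> e2 \<Longrightarrow> E b = 0"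
  shows "(\<Sum>b\<in>Basis. E b) = E e1 + E (e2::'a::euclidean_space)"
proof -
  have "(\<Sum>b\<in>Basis. E b) = (\<Sum>b\<in>{e1,e2}. E b)"
    by (rule sum.mono_neutral_right) (use assms in auto)
  then show ?thesis using assms by simp
qed

lemma coerc_pointwise:
  fixes d :: "'a::euclidean_space \<Rightarrow> complex" and u :: complex and Om Vx rh :: real
  assumes e: "e1 \<in> Basis" "e2 \<in> Basis" "e1 \<noteq> e2"
  shows "Re ((\<Sum>b\<in>Basis. d b * cnj (d b)) + of_real Vx * u * cnj u
           - of_real Om * cnj u * (- \<i> * (of_real (x \<bullet> e1) * d e2 - of_real (x \<bullet> e2) * d e1))
           + of_real rh * u * cnj u)
       = Re ((\<Sum>b\<in>Basis. (d b + \<i> * of_real (Om/2) * of_real (Rvec e1 e2 x \<bullet> b) * u) *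
                            cnj (d b + \<i> * of_real (Om/2) * of_real (Rvec e1 e2 x \<bullet> b) * u))
             + of_real (Vx - Om\<^sup>2 / 4 * ((x \<bullet> e1)\<^sup>2 + (x \<bullet> e2)\<^sup>2)) * u * cnj u) + rh * (cmod u)\<^sup>2"
proof -
  define F where "F b = (d b + \<i> * of_real (Om/2) * of_real (Rvec e1 e2 x \<bullet> b) * u) *
                            cnj (d b + \<i> * of_real (Om/2) * of_real (Rvec e1 e2 x \<bullet> b) * u)" for b
  define E where "E b = F b - d b * cnj (d b)" for b
  have E0: "E b = 0" if "b \<in> Basis" "b \<noteq> e1" "b \<noteq> e2" for b
    unfolding E_def F_def using Rvec_inner[OF e that(1)] that by simp
  have "(\<Sum>b\<in>Basis. F b) = (\<Sum>b\<in>Basis. d b * cnj (d b) + E b)" unfolding E_def by simp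
  also have "\<dots> = (\<Sum>b\<in>Basis. d b * cnj (d b)) + (E e1 + E e2)"
    by (simp add: sum.distrib sum_two[OF e E0])
  finally have sF: "(\<Sum>b\<in>Basis. F b) = (\<Sum>b\<in>Basis. d b * cnj (d b)) + (E e1 + E e2)" .
  have E1: "E e1 = (\<i> * of_real (Om/2) * of_real (x \<bullet> e2) * u) * cnj (d e1) + d e1 * cnj (\<i> * of_real (Om/2) * of_real (x \<bullet> e2) * u)
                + (\<i> * of_real (Om/2) * of_real (x \<bullet> e2) * u) * cnj (\<i> * of_real (Om/2) * of_real (x \<bullet> e2) * u)"
    unfolding E_def F_def using Rvec_inner[OF e e(1)] by (simp add: algebra_simps)
  have E2: "E e2 = (\<i> * of_real (Om/2) * of_real (- (x \<bullet> e1)) * u) * cnj (d e2) + d e2 * cnj (\<i> * of_real (Om/2) * of_real (- (x \<bullet> e1)) * u)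
                + (\<i> * of_real (Om/2) * of_real (- (x \<bullet> e1)) * u) * cnj (\<i> * of_real (Om/2) * of_real (- (x \<bullet> e1)) * u)"
    unfolding E_def F_def using Rvec_inner[OF e e(2)] e by (simp add: algebra_simps)
  have rhs: "rh * (cmod u)\<^sup>2 = Re (of_real rh * u * cnj u)"
    by (simp add: complex_norm_square[symmetric] mult.assoc)
  show ?thesis
    unfolding F_def[symmetric] sF E1 E2 rhs
    by (simp add: algebra_simps power2_eq_square) (simp add: field_simps)
qed


definition SI :: "'a::euclidean_space set \<Rightarrow> ('a \<Rightarrow> real) \<Rightarrow> ('a \<Rightarrow> real) \<Rightarrow> ('a \<Rightarrow> complex) \<Rightarrow> ('a \<Rightarrow> complex) \<Rightarrow> 'a \<Rightarrow> complex" where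
  "SI D Vj rh f g x = (\<Sum>b\<in>Basis. wpd D b f x * cnj (wpd D b g x)) + of_real (Vj x) * f x * cnj (g x) + of_real (rh x) * f x * cnj (g x)"

definition LI :: "'a::euclidean_space set \<Rightarrow> 'a \<Rightarrow> 'a \<Rightarrow> real \<Rightarrow> ('a \<Rightarrow> complex) \<Rightarrow> ('a \<Rightarrow> complex) \<Rightarrow> 'a \<Rightarrow> complex" where
  "LI D e1 e2 Om f g x = of_real Om * cnj (g x) * L3 D e1 e2 f x"

lemma aint_split:
  "a_integrand D e1 e2 p V \<Omega> K \<phi> j v w = (\<lambda>x. SI D (V j) (rho p K j \<phi>) (v j) (w j) x - LI D e1 e2 (\<Omega> j) (v j) (w j) x)"
  by (simp add: a_integrand_def SI_def LI_def algebra_simps fun_eq_iff)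

locale comp =
  fixes D :: "'a::euclidean_space set" and e1 e2 :: 'a and Vj :: "'a \<Rightarrow> real" and CV :: real
    and Om :: real and p :: nat and K :: "nat \<Rightarrow> nat \<Rightarrow> real" and j :: nat and \<phi> :: "nat \<Rightarrow> 'a \<Rightarrow> complex"
  assumes dim: "DIM('a) = 2 \<or> DIM('a) = 3" and D: "open D" "bounded D"
    and e: "e1 \<in> Basis" "e2 \<in> Basis" "e1 \<noteq> e2"
    and Vm: "Vj \<in> borel_measurable (lebesgue_on D)" and Vb: "AE x in lebesgue_on D. \<bar>Vj x\<bar> \<le> CV"
    and K0: "\<And>i. i < p \<Longrightarrow> 0 \<le> K i j" and \<phi>H: "\<And>i. i < p \<Longrightarrow> H10 D (\<phi> i)"
begin

abbreviation "M \<equiv> lebesgue_on D"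

lemma L3_L2: "H10 D f \<Longrightarrow> L2 D (L3 D e1 e2 f)"
  unfolding L3_def
  by (intro L2_const_mult L2_diff L2_coord_mult D e H10_wpd(1))

lemma Vf_L2: "H10 D f \<Longrightarrow> L2 D (\<lambda>x. of_real (Vj x) * f x)"
proof -
  assume f: "H10 D f"
  have m: "(\<lambda>x. complex_of_real (Vj x)) \<in> borel_measurable M" using Vm by measurable
  show ?thesis by (rule L2_mult_bounded_AE[OF H10_L2[OF f] m, where B=CV]) (use Vb in auto)
qed

lemma rh_expand: "of_real (rho p K j \<phi> x) * f x * cnj (g x) =
   (\<Sum>i<p. of_real (K i j) * (of_real ((cmod (\<phi> i x))^2) * f x * cnj (g x)))"
  unfolding rho_def by (simp add: sum_distrib_left sum_distrib_right mult_ac)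

lemma SI_int:
  assumes f: "H10 D f" and g: "H10 D g"
  shows "integrable M (SI D Vj (rho p K j \<phi>) f g)"
proof -
  have i1: "integrable M (\<lambda>x. \<Sum>b\<in>Basis. wpd D b f x * cnj (wpd D b g x))"
    by (rule Bochner_Integration.integrable_sum) (auto intro!: L2_prod L2_cnj H10_wpd(1) f g)
  have i2: "integrable M (\<lambda>x. of_real (Vj x) * f x * cnj (g x))"
    by (intro L2_prod Vf_L2 f L2_cnj H10_L2 g)
  have i3: "integrable M (\<lambda>x. of_real (rho p K j \<phi> x) * f x * cnj (g x))"
    unfolding rh_expand
  proof (rule Bochner_Integration.integrable_sum)
    fix i assume "i \<in> {..<p}"
    then have "H10 D (\<phi> i)" using \<phi>H by simp
    then show "integrable M (\<lambda>x. of_real (K i j) * (of_real ((cmod (\<phi> i x))^2) * f x * cnj (g x)))"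
      by (intro integrable_mult_right rho_term(1)[OF dim D _ f g])
  qed
  show ?thesis unfolding SI_def[abs_def] using i1 i2 i3 by (intro Bochner_Integration.integrable_add)
qed

lemma LI_int:
  assumes f: "H10 D f" and g: "H10 D g"
  shows "integrable M (LI D e1 e2 Om f g)"
  unfolding LI_def[abs_def]
  by (intro L2_prod L2_const_mult L2_cnj H10_L2 g L3_L2 f)

lemma SI_sym:
  assumes f: "H10 D f" and g: "H10 D g"
  shows "Re (\<integral>x. SI D Vj (rho p K j \<phi>) g f x \<partial>M) = Re (\<integral>x. SI D Vj (rho p K j \<phi>) f g x \<partial>M)"
proof -
  have "SI D Vj (rho p K j \<phi>) g f x = cnj (SI D Vj (rho p K j \<phi>) f g x)" for x
    unfolding SI_def by (simp add: mult_ac)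
  then have "(\<integral>x. SI D Vj (rho p K j \<phi>) g f x \<partial>M) = cnj (\<integral>x. SI D Vj (rho p K j \<phi>) f g x \<partial>M)"
    by simp
  then show ?thesis by simp
qed

definition Aint where "Aint a b f g = (\<integral>x. of_real (x \<bullet> a) * cnj (g x) * wpd D b f x \<partial>M)"

lemma Aint_swap:
  assumes ab: "a \<in> Basis" "b \<in> Basis" "a \<noteq> b" and f: "H10 D f" and g: "H10 D g"
  shows "Aint a b f g = - cnj (Aint a b g f)"
proof -
  have "Aint a b f g = - (\<integral>x. of_real (x \<bullet> a) * f x * cnj (wpd D b g x) \<partial>M)"
    unfolding Aint_def by (rule IBP[OF D ab f g])
  also have "(\<integral>x. of_real (x \<bullet> a) * f x * cnj (wpd D b g x) \<partial>M) = (\<integral>x. cnj (of_real (x \<bullet> a) * cnj (f x) * wpd D b g x) \<partial>M)"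
    by simp
  also have "\<dots> = cnj (Aint a b g f)" unfolding Aint_def by (rule Bochner_Integration.integral_cnj)
  finally show ?thesis .
qed

lemma LI_integral:
  assumes f: "H10 D f" and g: "H10 D g"
  shows "(\<integral>x. LI D e1 e2 Om f g x \<partial>M) = of_real Om * (- \<i>) * (Aint e1 e2 f g - Aint e2 e1 f g)"
proof -
  have i1: "integrable M (\<lambda>x. of_real (x \<bullet> e1) * cnj (g x) * wpd D e2 f x)"
    by (intro L2_prod L2_coord_mult D e L2_cnj H10_L2 g H10_wpd(1) f)
  have i2: "integrable M (\<lambda>x. of_real (x \<bullet> e2) * cnj (g x) * wpd D e1 f x)"
    by (intro L2_prod L2_coord_mult D e L2_cnj H10_L2 g H10_wpd(1) f)
  have "LI D e1 e2 Om f g x = of_real Om * (- \<i>) * (of_real (x \<bullet> e1) * cnj (g x) * wpd D e2 f x - of_real (x \<bullet> e2) * cnj (g x) * wpd D e1 f x)" for x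
    unfolding LI_def L3_def by (simp add: algebra_simps)
  then have "(\<integral>x. LI D e1 e2 Om f g x \<partial>M) = (\<integral>x. of_real Om * (- \<i>) * (of_real (x \<bullet> e1) * cnj (g x) * wpd D e2 f x - of_real (x \<bullet> e2) * cnj (g x) * wpd D e1 f x) \<partial>M)"
    by simp
  also have "\<dots> = of_real Om * (- \<i>) * (\<integral>x. of_real (x \<bullet> e1) * cnj (g x) * wpd D e2 f x - of_real (x \<bullet> e2) * cnj (g x) * wpd D e1 f x \<partial>M)"
    by (rule integral_mult_right_zero)
  also have "(\<integral>x. of_real (x \<bullet> e1) * cnj (g x) * wpd D e2 f x - of_real (x \<bullet> e2) * cnj (g x) * wpd D e1 f x \<partial>M) = Aint e1 e2 f g - Aint e2 e1 f g"
    unfolding Aint_def by (rule Bochner_Integration.integral_diff[OF i1 i2])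
  finally show ?thesis .
qed

lemma LI_sym:
  assumes f: "H10 D f" and g: "H10 D g"
  shows "Re (\<integral>x. LI D e1 e2 Om g f x \<partial>M) = Re (\<integral>x. LI D e1 e2 Om f g x \<partial>M)"
proof -
  have s1: "Aint e1 e2 f g = - cnj (Aint e1 e2 g f)" by (rule Aint_swap[OF e f g])
  have s2: "Aint e2 e1 f g = - cnj (Aint e2 e1 g f)" by (rule Aint_swap[OF e(2) e(1) e(3)[symmetric] f g])
  show ?thesis unfolding LI_integral[OF f g] LI_integral[OF g f] s1 s2
    by (simp add: algebra_simps)
qed

end


context comp
begin

lemma R0_ex: "\<exists>R0\<ge>0. \<forall>x\<in>D. norm x \<le> R0"
proof -
  obtain R where "\<forall>x\<in>D. norm x \<le> R" using D(2) unfolding bounded_iff by blast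
  then show ?thesis by (intro exI[of _ "\<bar>R\<bar>"]) auto
qed

lemma Rt_int:
  assumes f: "H10 D f" and g: "H10 D g"
  shows "integrable M (\<lambda>x. of_real (rho p K j \<phi> x) * f x * cnj (g x))"
  unfolding rh_expand
proof (rule Bochner_Integration.integrable_sum)
  fix i assume "i \<in> {..<p}"
  then have "H10 D (\<phi> i)" using \<phi>H by simp
  then show "integrable M (\<lambda>x. of_real (K i j) * (of_real ((cmod (\<phi> i x))^2) * f x * cnj (g x)))"
    by (intro integrable_mult_right rho_term(1)[OF dim D _ f g])
qed

lemma Rt_bound:
  assumes f: "H10 D f" and g: "H10 D g"
  shows "cmod (\<integral>x. of_real (rho p K j \<phi> x) * f x * cnj (g x) \<partial>M) \<le>
           (\<Sum>i<p. K i j * (8 * normH1 D (\<phi> i))) * sqrt (normH1 D f) * sqrt (normH1 D g)"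
proof -
  have ii: "integrable M (\<lambda>x. of_real ((cmod (\<phi> i x))^2) * f x * cnj (g x))" if "i < p" for i
    by (rule rho_term(1)[OF dim D \<phi>H[OF that] f g])
  have "(\<integral>x. of_real (rho p K j \<phi> x) * f x * cnj (g x) \<partial>M) =
        (\<Sum>i<p. of_real (K i j) * (\<integral>x. of_real ((cmod (\<phi> i x))^2) * f x * cnj (g x) \<partial>M))"
    unfolding rh_expand using ii by (simp add: Bochner_Integration.integral_sum)
  also have "cmod \<dots> \<le> (\<Sum>i<p. cmod (of_real (K i j) * (\<integral>x. of_real ((cmod (\<phi> i x))^2) * f x * cnj (g x) \<partial>M)))"
    by (rule norm_sum)
  also have "\<dots> \<le> (\<Sum>i<p. K i j * (8 * normH1 D (\<phi> i)) * sqrt (normH1 D f) * sqrt (normH1 D g))"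
  proof (rule sum_mono)
    fix i assume "i \<in> {..<p}"
    then have i: "i < p" by simp
    have "cmod (\<integral>x. of_real ((cmod (\<phi> i x))^2) * f x * cnj (g x) \<partial>M) \<le>
          (\<integral>x. cmod (of_real ((cmod (\<phi> i x))^2) * f x * cnj (g x)) \<partial>M)"
      by (rule integral_norm_bound)
    also have "\<dots> = (\<integral>x. (cmod (\<phi> i x))^2 * (cmod (f x) * cmod (g x)) \<partial>M)"
      by (simp add: norm_mult norm_power mult.assoc)
    also have "\<dots> \<le> 8 * normH1 D (\<phi> i) * sqrt (normH1 D f) * sqrt (normH1 D g)"
      by (rule rho_term(2)[OF dim D \<phi>H[OF i] f g])
    finally have "cmod (\<integral>x. of_real ((cmod (\<phi> i x))^2) * f x * cnj (g x) \<partial>M) \<le> 8 * normH1 D (\<phi> i) * sqrt (normH1 D f) * sqrt (normH1 D g)" .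
    then show "cmod (of_real (K i j) * (\<integral>x. of_real ((cmod (\<phi> i x))^2) * f x * cnj (g x) \<partial>M)) \<le>
        K i j * (8 * normH1 D (\<phi> i)) * sqrt (normH1 D f) * sqrt (normH1 D g)"
      using K0[OF i] by (simp add: norm_mult mult_left_mono mult.assoc)
  qed
  also have "\<dots> = (\<Sum>i<p. K i j * (8 * normH1 D (\<phi> i))) * sqrt (normH1 D f) * sqrt (normH1 D g)"
    by (simp add: sum_distrib_right)
  finally show ?thesis .
qed

lemma L3_sq_bound:
  assumes f: "H10 D f" and R0: "0 \<le> R0" "\<forall>x\<in>D. norm x \<le> R0"
  shows "(\<integral>x. (cmod (L3 D e1 e2 f x))^2 \<partial>M) \<le> 2 * R0^2 * normH1 D f"
proof -
  have iL: "integrable M (\<lambda>x. (cmod (L3 D e1 e2 f x))^2)" by (rule L2_int[OF L3_L2[OF f]])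
  have iu: "integrable M (\<lambda>x. (cmod (f x))^2)" by (rule L2_int[OF H10_L2[OF f]])
  have iw: "integrable M (\<lambda>x. (cmod (wpd D b f x))^2)" if "b \<in> Basis" for b
    by (rule L2_int[OF H10_wpd(1)[OF f that]])
  have iN: "integrable M (\<lambda>x. 2 * R0^2 * ((cmod (f x))\<^sup>2 + (\<Sum>b\<in>Basis. (cmod (wpd D b f x))\<^sup>2)))"
    using iu iw by auto
  have "(\<integral>x. (cmod (L3 D e1 e2 f x))^2 \<partial>M) \<le> (\<integral>x. 2 * R0^2 * ((cmod (f x))\<^sup>2 + (\<Sum>b\<in>Basis. (cmod (wpd D b f x))\<^sup>2)) \<partial>M)"
  proof (rule integral_mono[OF iL iN])
    fix x assume "x \<in> space M"
    then have xD: "x \<in> D" by (simp add: space_restrict_space)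
    have c1: "\<bar>x \<bullet> e1\<bar> \<le> R0" using Basis_le_norm[OF e(1), of x] R0 xD by fastforce
    have c2: "\<bar>x \<bullet> e2\<bar> \<le> R0" using Basis_le_norm[OF e(2), of x] R0 xD by fastforce
    let ?a = "cmod (wpd D e2 f x)" and ?b = "cmod (wpd D e1 f x)"
    have "cmod (L3 D e1 e2 f x) = cmod (of_real (x \<bullet> e1) * wpd D e2 f x - of_real (x \<bullet> e2) * wpd D e1 f x)"
      unfolding L3_def by (simp add: norm_mult)
    also have "\<dots> \<le> cmod (of_real (x \<bullet> e1) * wpd D e2 f x) + cmod (of_real (x \<bullet> e2) * wpd D e1 f x)"
      by (rule norm_triangle_ineq4)
    also have "\<dots> \<le> R0 * ?a + R0 * ?b"
      using c1 c2 by (intro add_mono) (simp_all add: norm_mult mult_right_mono)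
    finally have l: "cmod (L3 D e1 e2 f x) \<le> R0 * (?a + ?b)" by (simp add: algebra_simps)
    have "(cmod (L3 D e1 e2 f x))^2 \<le> (R0 * (?a + ?b))^2" using l by (simp add: power_mono)
    also have "\<dots> \<le> 2 * R0^2 * (?a^2 + ?b^2)"
    proof -
      have "0 \<le> (?a - ?b)^2" by simp
      then have h: "(?a + ?b)^2 \<le> 2 * (?a^2 + ?b^2)" by (simp add: power2_eq_square algebra_simps)
      have m: "R0^2 * (?a + ?b)^2 \<le> R0^2 * (2 * (?a^2 + ?b^2))" by (rule mult_left_mono[OF h]) simp
      have eq: "(R0 * (?a + ?b))^2 = R0^2 * (?a + ?b)^2" by (rule power_mult_distrib)
      have eq2: "R0^2 * (2 * (?a^2 + ?b^2)) = 2 * R0^2 * (?a^2 + ?b^2)" by (simp only: mult_ac)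
      show ?thesis unfolding eq using m eq2 by linarith
    qed
    also have "?a^2 + ?b^2 \<le> (\<Sum>b\<in>Basis. (cmod (wpd D b f x))\<^sup>2)"
    proof -
      have "?a^2 + ?b^2 = (\<Sum>b\<in>{e1,e2}. (cmod (wpd D b f x))\<^sup>2)" using e(3) by simp
      also have "\<dots> \<le> (\<Sum>b\<in>Basis. (cmod (wpd D b f x))\<^sup>2)"
        by (rule sum_mono2) (use e in auto)
      finally show ?thesis .
    qed
    then have "2 * R0^2 * (?a^2 + ?b^2) \<le> 2 * R0^2 * ((cmod (f x))\<^sup>2 + (\<Sum>b\<in>Basis. (cmod (wpd D b f x))\<^sup>2))"
      by (intro mult_left_mono) (auto simp: add_increasing)
    finally show "(cmod (L3 D e1 e2 f x))^2 \<le> 2 * R0^2 * ((cmod (f x))\<^sup>2 + (\<Sum>b\<in>Basis. (cmod (wpd D b f x))\<^sup>2))" .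
  qed
  also have "\<dots> = 2 * R0^2 * normH1 D f" unfolding normH1_def by simp
  finally show ?thesis .
qed

lemma aI_bound:
  "\<exists>C\<ge>0. \<forall>f g. H10 D f \<longrightarrow> H10 D g \<longrightarrow>
      cmod (\<integral>x. SI D Vj (rho p K j \<phi>) f g x - LI D e1 e2 Om f g x \<partial>M) \<le> C * sqrt (normH1 D f) * sqrt (normH1 D g)"
proof -
  obtain R0 where R0: "0 \<le> R0" "\<forall>x\<in>D. norm x \<le> R0" using R0_ex by blast
  define C where "C = real (card (Basis::'a set)) + \<bar>CV\<bar> + \<bar>Om\<bar> * (sqrt 2 * R0) + (\<Sum>i<p. K i j * (8 * normH1 D (\<phi> i)))"
  have C0: "0 \<le> C" unfolding C_def using R0 K0 by (auto intro!: add_nonneg_nonneg sum_nonneg mult_nonneg_nonneg normH1_nonneg)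
  show ?thesis
  proof (intro exI[of _ C] conjI allI impI C0)
    fix f g assume f: "H10 D f" and g: "H10 D g"
    define Nf where "Nf = normH1 D f"
    define Ng where "Ng = normH1 D g"
    have Nf0: "0 \<le> Nf" "0 \<le> Ng" unfolding Nf_def Ng_def by (simp_all add: normH1_nonneg)
    have fL2: "L2 D f" and gL2: "L2 D g" using f g by (simp_all add: H10_L2)
    have i1: "integrable M (\<lambda>x. \<Sum>b\<in>Basis. wpd D b f x * cnj (wpd D b g x))"
      by (rule Bochner_Integration.integrable_sum) (auto intro!: L2_prod L2_cnj H10_wpd(1) f g)
    have i2: "integrable M (\<lambda>x. of_real (Vj x) * f x * cnj (g x))"
      by (intro L2_prod Vf_L2 f L2_cnj H10_L2 g)
    have i3: "integrable M (\<lambda>x. of_real (rho p K j \<phi> x) * f x * cnj (g x))" by (rule Rt_int[OF f g])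
    have i4: "integrable M (LI D e1 e2 Om f g)" by (rule LI_int[OF f g])
    have split: "(\<integral>x. SI D Vj (rho p K j \<phi>) f g x - LI D e1 e2 Om f g x \<partial>M) =
      (\<integral>x. (\<Sum>b\<in>Basis. wpd D b f x * cnj (wpd D b g x)) \<partial>M) + (\<integral>x. of_real (Vj x) * f x * cnj (g x) \<partial>M)
      + (\<integral>x. of_real (rho p K j \<phi> x) * f x * cnj (g x) \<partial>M) - (\<integral>x. LI D e1 e2 Om f g x \<partial>M)"
      unfolding SI_def using i1 i2 i3 i4 by simp
    have b1: "cmod (\<integral>x. (\<Sum>b\<in>Basis. wpd D b f x * cnj (wpd D b g x)) \<partial>M) \<le> real (card (Basis::'a set)) * sqrt Nf * sqrt Ng"
    proof -
      have "(\<integral>x. (\<Sum>b\<in>Basis. wpd D b f x * cnj (wpd D b g x)) \<partial>M) = (\<Sum>b\<in>Basis. \<integral>x. wpd D b f x * cnj (wpd D b g x) \<partial>M)"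
        by (rule Bochner_Integration.integral_sum) (auto intro!: L2_prod L2_cnj H10_wpd(1) f g)
      also have "cmod \<dots> \<le> (\<Sum>b\<in>Basis. cmod (\<integral>x. wpd D b f x * cnj (wpd D b g x) \<partial>M))" by (rule norm_sum)
      also have "\<dots> \<le> (\<Sum>b\<in>(Basis::'a set). sqrt Nf * sqrt Ng)"
      proof (rule sum_mono)
        fix b :: 'a assume b: "b \<in> Basis"
        show "cmod (\<integral>x. wpd D b f x * cnj (wpd D b g x) \<partial>M) \<le> sqrt Nf * sqrt Ng"
          using L2_sq_le_normH1(2)[OF f b] L2_sq_le_normH1(2)[OF g b] unfolding Nf_def Ng_def
          by (intro bound_CS L2_cnj H10_wpd(1) f g b) simp_all
      qed
      also have "\<dots> = real (card (Basis::'a set)) * sqrt Nf * sqrt Ng" by simp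
      finally show ?thesis .
    qed
    have b2: "cmod (\<integral>x. of_real (Vj x) * f x * cnj (g x) \<partial>M) \<le> \<bar>CV\<bar> * sqrt Nf * sqrt Ng"
    proof -
      have iVf: "integrable M (\<lambda>x. (cmod (of_real (Vj x) * f x))^2)" by (rule L2_int[OF Vf_L2[OF f]])
      have iCf: "integrable M (\<lambda>x. CV^2 * (cmod (f x))^2)" using L2_int[OF fL2] by simp
      have "(\<integral>x. (cmod (of_real (Vj x) * f x))^2 \<partial>M) \<le> (\<integral>x. CV^2 * (cmod (f x))^2 \<partial>M)"
      proof (rule integral_mono_AE[OF iVf iCf])
        show "AE x in M. (cmod (of_real (Vj x) * f x))^2 \<le> CV^2 * (cmod (f x))^2"
          using Vb
        proof eventually_elim
          case (elim x)
          have "\<bar>Vj x\<bar>^2 \<le> CV^2" using elim by (metis abs_ge_zero abs_le_square_iff abs_of_nonneg order_trans power2_abs abs_ge_self)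
          then show ?case by (simp add: norm_mult power_mult_distrib mult_right_mono)
        qed
      qed
      also have "\<dots> \<le> CV^2 * Nf" unfolding Nf_def using L2_sq_le_normH1(1)[OF f] by (simp add: mult_left_mono)
      finally have A: "(\<integral>x. (cmod (of_real (Vj x) * f x))^2 \<partial>M) \<le> CV^2 * Nf" .
      have B: "(\<integral>x. (cmod (cnj (g x)))^2 \<partial>M) \<le> Ng" unfolding Ng_def using L2_sq_le_normH1(1)[OF g] by simp
      have "cmod (\<integral>x. of_real (Vj x) * f x * cnj (g x) \<partial>M) \<le> sqrt (CV^2 * Nf) * sqrt Ng"
        by (rule bound_CS[OF Vf_L2[OF f] L2_cnj[OF gL2] A B])
      also have "\<dots> = \<bar>CV\<bar> * sqrt Nf * sqrt Ng" by (simp add: real_sqrt_mult)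
      finally show ?thesis .
    qed
    have b3: "cmod (\<integral>x. of_real (rho p K j \<phi> x) * f x * cnj (g x) \<partial>M) \<le> (\<Sum>i<p. K i j * (8 * normH1 D (\<phi> i))) * sqrt Nf * sqrt Ng"
      unfolding Nf_def Ng_def by (rule Rt_bound[OF f g])
    have b4: "cmod (\<integral>x. LI D e1 e2 Om f g x \<partial>M) \<le> \<bar>Om\<bar> * (sqrt 2 * R0) * sqrt Nf * sqrt Ng"
    proof -
      have A: "(\<integral>x. (cmod (of_real Om * cnj (g x)))^2 \<partial>M) \<le> Om^2 * Ng"
        unfolding Ng_def using L2_sq_le_normH1(1)[OF g] by (simp add: norm_mult power_mult_distrib mult_left_mono)
      have B: "(\<integral>x. (cmod (L3 D e1 e2 f x))^2 \<partial>M) \<le> 2 * R0^2 * Nf"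
        unfolding Nf_def by (rule L3_sq_bound[OF f R0])
      have "cmod (\<integral>x. LI D e1 e2 Om f g x \<partial>M) \<le> sqrt (Om^2 * Ng) * sqrt (2 * R0^2 * Nf)"
        unfolding LI_def by (rule bound_CS[OF L2_const_mult[OF L2_cnj[OF gL2]] L3_L2[OF f] A B])
      also have "\<dots> = \<bar>Om\<bar> * (sqrt 2 * R0) * sqrt Nf * sqrt Ng"
        using R0 by (simp add: real_sqrt_mult mult_ac)
      finally show ?thesis .
    qed
    have "cmod (\<integral>x. SI D Vj (rho p K j \<phi>) f g x - LI D e1 e2 Om f g x \<partial>M) \<le>
        cmod (\<integral>x. (\<Sum>b\<in>Basis. wpd D b f x * cnj (wpd D b g x)) \<partial>M) + cmod (\<integral>x. of_real (Vj x) * f x * cnj (g x) \<partial>M)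
      + cmod (\<integral>x. of_real (rho p K j \<phi> x) * f x * cnj (g x) \<partial>M) + cmod (\<integral>x. LI D e1 e2 Om f g x \<partial>M)"
      unfolding split
    proof -
      fix A B Cc Dd :: complex
      have "cmod (A + B + Cc - Dd) \<le> cmod (A + B + Cc) + cmod Dd" by (rule norm_triangle_ineq4)
      moreover have "cmod (A + B + Cc) \<le> cmod (A + B) + cmod Cc" by (rule norm_triangle_ineq)
      moreover have "cmod (A + B) \<le> cmod A + cmod B" by (rule norm_triangle_ineq)
      ultimately show "cmod (A + B + Cc - Dd) \<le> cmod A + cmod B + cmod Cc + cmod Dd" by linarith
    qed
    also have "\<dots> \<le> real (card (Basis::'a set)) * sqrt Nf * sqrt Ng + \<bar>CV\<bar> * sqrt Nf * sqrt Ng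
        + (\<Sum>i<p. K i j * (8 * normH1 D (\<phi> i))) * sqrt Nf * sqrt Ng + \<bar>Om\<bar> * (sqrt 2 * R0) * sqrt Nf * sqrt Ng"
      using b1 b2 b3 b4 by linarith
    also have "\<dots> = C * sqrt Nf * sqrt Ng" unfolding C_def by (simp add: algebra_simps)
    finally show "cmod (\<integral>x. SI D Vj (rho p K j \<phi>) f g x - LI D e1 e2 Om f g x \<partial>M) \<le> C * sqrt (normH1 D f) * sqrt (normH1 D g)"
      unfolding Nf_def Ng_def .
  qed
qed

end


lemma rearr: "(a::complex) + v + r - l = a + v - l + r" by simp

lemma coerc_pointwise2:
  fixes d :: "'a::euclidean_space \<Rightarrow> complex" and u :: complex and Om Vx rh :: real
  assumes e: "e1 \<in> Basis" "e2 \<in> Basis" "e1 \<noteq> e2"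
  shows "Re ((\<Sum>b\<in>Basis. d b * cnj (d b)) + of_real Vx * u * cnj u + of_real rh * u * cnj u
           - of_real Om * cnj u * (- \<i> * (of_real (x \<bullet> e1) * d e2 - of_real (x \<bullet> e2) * d e1)))
       = Re ((\<Sum>b\<in>Basis. (d b + \<i> * of_real (Om/2) * of_real (Rvec e1 e2 x \<bullet> b) * u) *
                            cnj (d b + \<i> * of_real (Om/2) * of_real (Rvec e1 e2 x \<bullet> b) * u))
             + of_real (Vx - Om\<^sup>2 / 4 * ((x \<bullet> e1)\<^sup>2 + (x \<bullet> e2)\<^sup>2)) * u * cnj u) + rh * (cmod u)\<^sup>2"
proof -
  have "(\<Sum>b\<in>Basis. d b * cnj (d b)) + of_real Vx * u * cnj u + of_real rh * u * cnj u
           - of_real Om * cnj u * (- \<i> * (of_real (x \<bullet> e1) * d e2 - of_real (x \<bullet> e2) * d e1))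
      = (\<Sum>b\<in>Basis. d b * cnj (d b)) + of_real Vx * u * cnj u
           - of_real Om * cnj u * (- \<i> * (of_real (x \<bullet> e1) * d e2 - of_real (x \<bullet> e2) * d e1))
           + of_real rh * u * cnj u" by (rule rearr)
  then show ?thesis using coerc_pointwise[OF e, of d Vx u Om x rh] by simp
qed

context comp
begin

definition RIc where
  "RIc f x = (\<Sum>b\<in>Basis. gradR D e1 e2 Om f b x * cnj (gradR D e1 e2 Om f b x))
             + of_real (Vj x - Om\<^sup>2 / 4 * ((x \<bullet> e1)\<^sup>2 + (x \<bullet> e2)\<^sup>2)) * f x * cnj (f x)"

lemma gradR_L2:
  assumes f: "H10 D f" and b: "b \<in> Basis"
  shows "L2 D (\<lambda>x. gradR D e1 e2 Om f b x)"
proof -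
  obtain R0 where R0: "0 \<le> R0" "\<forall>x\<in>D. norm x \<le> R0" using R0_ex by blast
  let ?h = "\<lambda>x. \<i> * of_real (Om/2) * of_real (Rvec e1 e2 x \<bullet> b)"
  have hm: "?h \<in> borel_measurable M"
    by (rule continuous_imp_measurable_on_sets_lebesgue) (use D in \<open>auto simp: Rvec_def intro!: continuous_intros\<close>)
  have hb: "cmod (?h x) \<le> \<bar>Om/2\<bar> * R0" if "x \<in> D" for x
  proof -
    have "\<bar>Rvec e1 e2 x \<bullet> b\<bar> \<le> norm x"
      using Rvec_inner[OF e b, of x] Basis_le_norm[OF e(1), of x] Basis_le_norm[OF e(2), of x] by auto
    also have "\<dots> \<le> R0" using R0 that by blast
    finally have "\<bar>Rvec e1 e2 x \<bullet> b\<bar> \<le> R0" .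
    then show ?thesis by (simp add: norm_mult mult_left_mono)
  qed
  have "L2 D (\<lambda>x. ?h x * f x)" by (rule L2_mult_bounded[OF H10_L2[OF f] hm hb])
  then have "L2 D (\<lambda>x. wpd D b f x + ?h x * f x)" by (intro L2_add H10_wpd(1)[OF f b])
  then show ?thesis unfolding gradR_def by (simp add: mult.assoc)
qed

lemma RIc_int:
  assumes f: "H10 D f"
  shows "integrable M (RIc f)"
proof -
  obtain R0 where R0: "0 \<le> R0" "\<forall>x\<in>D. norm x \<le> R0" using R0_ex by blast
  have i1: "integrable M (\<lambda>x. \<Sum>b\<in>Basis. gradR D e1 e2 Om f b x * cnj (gradR D e1 e2 Om f b x))"
    by (rule Bochner_Integration.integrable_sum) (auto intro!: L2_prod L2_cnj gradR_L2 f)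
  let ?h = "\<lambda>x. complex_of_real (Vj x - Om\<^sup>2 / 4 * ((x \<bullet> e1)\<^sup>2 + (x \<bullet> e2)\<^sup>2))"
  have cm: "(\<lambda>x. (x \<bullet> e1)\<^sup>2 + (x \<bullet> e2)\<^sup>2) \<in> borel_measurable M"
    by (rule continuous_imp_measurable_on_sets_lebesgue) (use D in \<open>auto intro!: continuous_intros\<close>)
  have hm: "?h \<in> borel_measurable M" using Vm cm by measurable
  have hb: "AE x in M. cmod (?h x) \<le> CV + Om\<^sup>2 / 4 * (2 * R0^2)"
    using Vb
  proof (rule AE_mp, intro AE_I2 impI)
    fix x assume x: "x \<in> space M" and v: "\<bar>Vj x\<bar> \<le> CV"
    then have xD: "x \<in> D" by (simp add: space_restrict_space)
    have "norm x \<le> R0" using R0 xD by blast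
    then have "\<bar>x \<bullet> e1\<bar> \<le> R0" "\<bar>x \<bullet> e2\<bar> \<le> R0"
      using Basis_le_norm[OF e(1), of x] Basis_le_norm[OF e(2), of x] by linarith+
    then have c1: "(x \<bullet> e1)\<^sup>2 \<le> R0^2" and c2: "(x \<bullet> e2)\<^sup>2 \<le> R0^2"
      using power2_le_iff_abs_le[OF R0(1)] by blast+
    have "cmod (?h x) = \<bar>Vj x - Om\<^sup>2 / 4 * ((x \<bullet> e1)\<^sup>2 + (x \<bullet> e2)\<^sup>2)\<bar>" by (rule norm_of_real)
    also have "\<dots> \<le> \<bar>Vj x\<bar> + Om\<^sup>2 / 4 * ((x \<bullet> e1)\<^sup>2 + (x \<bullet> e2)\<^sup>2)" by (simp add: abs_triangle_ineq4[THEN order_trans])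
    also have "\<dots> \<le> CV + Om\<^sup>2 / 4 * (2 * R0^2)"
      using v c1 c2 by (intro add_mono mult_left_mono) auto
    finally show "cmod (?h x) \<le> CV + Om\<^sup>2 / 4 * (2 * R0^2)" .
  qed
  have i2: "integrable M (\<lambda>x. ?h x * f x * cnj (f x))"
    by (intro L2_prod L2_mult_bounded_AE[OF H10_L2[OF f] hm hb] L2_cnj H10_L2 f)
  show ?thesis unfolding RIc_def[abs_def] using i1 i2 by (rule Bochner_Integration.integrable_add)
qed

lemma rho_nonneg: "0 \<le> rho p K j \<phi> x"
  unfolding rho_def using K0 by (auto intro!: sum_nonneg)

lemma coerc:
  assumes f: "H10 D f"
  shows "Re (\<integral>x. RIc f x \<partial>M) \<le> Re (\<integral>x. SI D Vj (rho p K j \<phi>) f f x - LI D e1 e2 Om f f x \<partial>M)"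
proof -
  have iA: "integrable M (\<lambda>x. SI D Vj (rho p K j \<phi>) f f x - LI D e1 e2 Om f f x)"
    by (intro Bochner_Integration.integrable_diff SI_int LI_int f)
  have iR: "integrable M (RIc f)" by (rule RIc_int[OF f])
  have irho: "integrable M (\<lambda>x. rho p K j \<phi> x * (cmod (f x))\<^sup>2)"
  proof -
    have "integrable M (\<lambda>x. Re (of_real (rho p K j \<phi> x) * f x * cnj (f x)))"
      by (intro integrable_Re Rt_int f)
    moreover have "Re (of_real (rho p K j \<phi> x) * f x * cnj (f x)) = rho p K j \<phi> x * (cmod (f x))\<^sup>2" for x
      by (simp add: complex_norm_square[symmetric] mult.assoc)
    ultimately show ?thesis by simp
  qed
  have pw: "Re (SI D Vj (rho p K j \<phi>) f f x - LI D e1 e2 Om f f x) = Re (RIc f x) + rho p K j \<phi> x * (cmod (f x))\<^sup>2" for x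
    unfolding SI_def LI_def L3_def RIc_def gradR_def
    by (rule coerc_pointwise2[OF e])
  have "Re (\<integral>x. SI D Vj (rho p K j \<phi>) f f x - LI D e1 e2 Om f f x \<partial>M) =
        (\<integral>x. Re (SI D Vj (rho p K j \<phi>) f f x - LI D e1 e2 Om f f x) \<partial>M)"
    by (rule integral_Re[OF iA, symmetric])
  also have "\<dots> = (\<integral>x. Re (RIc f x) + rho p K j \<phi> x * (cmod (f x))\<^sup>2 \<partial>M)" unfolding pw ..
  also have "\<dots> = (\<integral>x. Re (RIc f x) \<partial>M) + (\<integral>x. rho p K j \<phi> x * (cmod (f x))\<^sup>2 \<partial>M)"
    by (rule Bochner_Integration.integral_add[OF integrable_Re[OF iR] irho])
  also have "\<dots> \<ge> (\<integral>x. Re (RIc f x) \<partial>M)"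
  proof -
    have "0 \<le> (\<integral>x. rho p K j \<phi> x * (cmod (f x))\<^sup>2 \<partial>M)"
      by (intro integral_nonneg_AE AE_I2 mult_nonneg_nonneg rho_nonneg) simp
    then show ?thesis by simp
  qed
  also have "(\<integral>x. Re (RIc f x) \<partial>M) = Re (\<integral>x. RIc f x \<partial>M)" by (rule integral_Re[OF iR])
  finally show ?thesis .
qed

end


theorem proposition3p1:
  fixes D :: "'a::euclidean_space set"
    and e1 e2 :: 'a
    and p :: nat
    and V :: "nat \<Rightarrow> 'a \<Rightarrow> real"
    and \<Omega> :: "nat \<Rightarrow> real"
    and K :: "nat \<Rightarrow> nat \<Rightarrow> real"
  assumes dim: "DIM('a) = 2 \<or> DIM('a) = 3"
    and axes: "e1 \<in> Basis" "e2 \<in> Basis" "e1 \<noteq> e2"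
    and dom: "open D" "bounded D" "convex D" "D \<noteq> {}"
    and p: "p \<ge> 1"
    and A1: "\<And>j. j < p \<Longrightarrow> V j \<in> borel_measurable (lebesgue_on D) \<and>
                 (\<exists>C. AE x in lebesgue_on D. \<bar>V j x\<bar> \<le> C) \<and>
                 (AE x in lebesgue_on D. V j x \<ge> 0)"
    and A2: "\<And>j. j < p \<Longrightarrow> \<exists>\<epsilon>>0. AE x in lebesgue_on D.
                 V j x - (1 + \<epsilon>) / 4 * (\<Omega> j)\<^sup>2 * ((x \<bullet> e1)\<^sup>2 + (x \<bullet> e2)\<^sup>2) \<ge> 0"
    and A3: "\<And>i j. i < p \<Longrightarrow> j < p \<Longrightarrow> K i j = K j i \<and> K i j \<ge> 0"
    and \<phi>H: "inH D p \<phi>"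
  shows "(\<forall>v w. inH D p v \<longrightarrow> inH D p w \<longrightarrow>
            (\<forall>j<p. integrable (lebesgue_on D) (a_integrand D e1 e2 p V \<Omega> K \<phi> j v w)))
       \<and> (\<forall>v w. inH D p v \<longrightarrow> inH D p w \<longrightarrow>
            a_form D e1 e2 p V \<Omega> K \<phi> v w = a_form D e1 e2 p V \<Omega> K \<phi> w v)
       \<and> (\<exists>C. \<forall>v w. inH D p v \<longrightarrow> inH D p w \<longrightarrow>
            \<bar>a_form D e1 e2 p V \<Omega> K \<phi> v w\<bar> \<le> C * sqrt (H_norm2 D p v) * sqrt (H_norm2 D p w))
       \<and> (\<forall>v. inH D p v \<longrightarrow>
            a_form D e1 e2 p V \<Omega> K \<phi> v v \<ge> (R_norm D e1 e2 p V \<Omega> v)\<^sup>2)"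
proof -
  let ?M = "lebesgue_on D"
  have "\<forall>j. \<exists>C. j < p \<longrightarrow> (AE x in ?M. \<bar>V j x\<bar> \<le> C)" using A1 by blast
  then obtain CV where CV: "\<And>j. j < p \<Longrightarrow> AE x in ?M. \<bar>V j x\<bar> \<le> CV j" by metis
  have \<phi>i: "\<And>i. i < p \<Longrightarrow> H10 D (\<phi> i)" using \<phi>H unfolding inH_def by blast
  have loc: "comp D e1 e2 (V j) (CV j) p K j \<phi>" if j: "j < p" for j
    by unfold_locales (use dim axes dom A1[OF j] CV[OF j] A3 j \<phi>i in auto)
  have vH: "H10 D (v j)" if "inH D p v" "j < p" for v j using that unfolding inH_def by blast
  let ?SI = "\<lambda>j f g. SI D (V j) (rho p K j \<phi>) f g"
  let ?LI = "\<lambda>j f g. LI D e1 e2 (\<Omega> j) f g"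
  have aeq: "(\<integral>x. a_integrand D e1 e2 p V \<Omega> K \<phi> j v w x \<partial>?M) = (\<integral>x. ?SI j (v j) (w j) x - ?LI j (v j) (w j) x \<partial>?M)"
    for j v w unfolding aint_split ..
  have aform: "a_form D e1 e2 p V \<Omega> K \<phi> v w = (\<Sum>j<p. Re (\<integral>x. ?SI j (v j) (w j) x - ?LI j (v j) (w j) x \<partial>?M))"
    for v w unfolding a_form_def aeq ..
  
  have P1: "\<forall>v w. inH D p v \<longrightarrow> inH D p w \<longrightarrow>
            (\<forall>j<p. integrable ?M (a_integrand D e1 e2 p V \<Omega> K \<phi> j v w))"
  proof (intro allI impI)
    fix v w j assume v: "inH D p v" and w: "inH D p w" and j: "j < p"
    interpret comp D e1 e2 "V j" "CV j" "\<Omega> j" p K j \<phi> by (rule loc[OF j])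
    show "integrable ?M (a_integrand D e1 e2 p V \<Omega> K \<phi> j v w)"
      unfolding aint_split
      by (intro Bochner_Integration.integrable_diff SI_int LI_int vH[OF v j] vH[OF w j])
  qed
  
  have P2: "\<forall>v w. inH D p v \<longrightarrow> inH D p w \<longrightarrow>
            a_form D e1 e2 p V \<Omega> K \<phi> v w = a_form D e1 e2 p V \<Omega> K \<phi> w v"
  proof (intro allI impI)
    fix v w assume v: "inH D p v" and w: "inH D p w"
    show "a_form D e1 e2 p V \<Omega> K \<phi> v w = a_form D e1 e2 p V \<Omega> K \<phi> w v"
      unfolding aform
    proof (rule sum.cong[OF refl])
      fix j assume "j \<in> {..<p}"
      then have j: "j < p" by simp
      interpret comp D e1 e2 "V j" "CV j" "\<Omega> j" p K j \<phi> by (rule loc[OF j])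
      have f: "H10 D (v j)" and g: "H10 D (w j)" using vH v w j by auto
      have e1: "(\<integral>x. ?SI j (v j) (w j) x - ?LI j (v j) (w j) x \<partial>?M) =
                (\<integral>x. ?SI j (v j) (w j) x \<partial>?M) - (\<integral>x. ?LI j (v j) (w j) x \<partial>?M)"
        by (rule Bochner_Integration.integral_diff[OF SI_int[OF f g] LI_int[OF f g]])
      have e2: "(\<integral>x. ?SI j (w j) (v j) x - ?LI j (w j) (v j) x \<partial>?M) =
                (\<integral>x. ?SI j (w j) (v j) x \<partial>?M) - (\<integral>x. ?LI j (w j) (v j) x \<partial>?M)"
        by (rule Bochner_Integration.integral_diff[OF SI_int[OF g f] LI_int[OF g f]])
      show "Re (\<integral>x. ?SI j (v j) (w j) x - ?LI j (v j) (w j) x \<partial>?M) =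
            Re (\<integral>x. ?SI j (w j) (v j) x - ?LI j (w j) (v j) x \<partial>?M)"
        unfolding e1 e2 using SI_sym[OF f g] LI_sym[OF f g] by simp
    qed
  qed
  
  have "\<forall>j. \<exists>C. j < p \<longrightarrow> (0 \<le> C \<and> (\<forall>f g. H10 D f \<longrightarrow> H10 D g \<longrightarrow>
      cmod (\<integral>x. ?SI j f g x - ?LI j f g x \<partial>?M) \<le> C * sqrt (normH1 D f) * sqrt (normH1 D g)))"
  proof
    fix j show "\<exists>C. j < p \<longrightarrow> (0 \<le> C \<and> (\<forall>f g. H10 D f \<longrightarrow> H10 D g \<longrightarrow>
      cmod (\<integral>x. ?SI j f g x - ?LI j f g x \<partial>?M) \<le> C * sqrt (normH1 D f) * sqrt (normH1 D g)))"
    proof (cases "j < p")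
      case True
      interpret comp D e1 e2 "V j" "CV j" "\<Omega> j" p K j \<phi> by (rule loc[OF True])
      show ?thesis using aI_bound by blast
    qed simp
  qed
  then obtain Cf where Cf: "\<And>j. j < p \<Longrightarrow> 0 \<le> Cf j"
    and Cb: "\<And>j f g. j < p \<Longrightarrow> H10 D f \<Longrightarrow> H10 D g \<Longrightarrow>
      cmod (\<integral>x. ?SI j f g x - ?LI j f g x \<partial>?M) \<le> Cf j * sqrt (normH1 D f) * sqrt (normH1 D g)"
    by metis
  have P3: "\<exists>C. \<forall>v w. inH D p v \<longrightarrow> inH D p w \<longrightarrow>
            \<bar>a_form D e1 e2 p V \<Omega> K \<phi> v w\<bar> \<le> C * sqrt (H_norm2 D p v) * sqrt (H_norm2 D p w)"
  proof (intro exI[of _ "\<Sum>j<p. Cf j"] allI impI)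
    fix v w assume v: "inH D p v" and w: "inH D p w"
    have Nle: "normH1 D (u j) \<le> H_norm2 D p u" if "j < p" for u :: "nat \<Rightarrow> 'a \<Rightarrow> complex" and j
      unfolding H_norm2_normH1 by (rule member_le_sum) (use that in \<open>auto simp: normH1_nonneg\<close>)
    have "\<bar>a_form D e1 e2 p V \<Omega> K \<phi> v w\<bar> \<le> (\<Sum>j<p. \<bar>Re (\<integral>x. ?SI j (v j) (w j) x - ?LI j (v j) (w j) x \<partial>?M)\<bar>)"
      unfolding aform by (rule sum_abs)
    also have "\<dots> \<le> (\<Sum>j<p. Cf j * sqrt (H_norm2 D p v) * sqrt (H_norm2 D p w))"
    proof (rule sum_mono)
      fix j assume "j \<in> {..<p}"
      then have j: "j < p" by simp
      have "\<bar>Re (\<integral>x. ?SI j (v j) (w j) x - ?LI j (v j) (w j) x \<partial>?M)\<bar> \<le> cmod (\<integral>x. ?SI j (v j) (w j) x - ?LI j (v j) (w j) x \<partial>?M)"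
        by (rule abs_Re_le_cmod)
      also have "\<dots> \<le> Cf j * sqrt (normH1 D (v j)) * sqrt (normH1 D (w j))"
        by (rule Cb[OF j vH[OF v j] vH[OF w j]])
      also have "\<dots> \<le> Cf j * sqrt (H_norm2 D p v) * sqrt (H_norm2 D p w)"
      proof -
        have Hv: "0 \<le> H_norm2 D p v" using Nle[OF j, of v] normH1_nonneg[of D "v j"] by linarith
        show ?thesis using Cf[OF j] Nle[OF j, of v] Nle[OF j, of w] Hv
          by (intro mult_mono real_sqrt_le_mono mult_nonneg_nonneg) (auto simp: normH1_nonneg)
      qed
      finally show "\<bar>Re (\<integral>x. ?SI j (v j) (w j) x - ?LI j (v j) (w j) x \<partial>?M)\<bar> \<le> Cf j * sqrt (H_norm2 D p v) * sqrt (H_norm2 D p w)" .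
    qed
    also have "\<dots> = (\<Sum>j<p. Cf j) * sqrt (H_norm2 D p v) * sqrt (H_norm2 D p w)"
      by (simp add: sum_distrib_right)
    finally show "\<bar>a_form D e1 e2 p V \<Omega> K \<phi> v w\<bar> \<le> (\<Sum>j<p. Cf j) * sqrt (H_norm2 D p v) * sqrt (H_norm2 D p w)" .
  qed
  
  have P4: "\<forall>v. inH D p v \<longrightarrow> a_form D e1 e2 p V \<Omega> K \<phi> v v \<ge> (R_norm D e1 e2 p V \<Omega> v)\<^sup>2"
  proof (intro allI impI)
    fix v assume v: "inH D p v"
    have Req: "R_inner D e1 e2 p V \<Omega> v v = (\<Sum>j<p. Re (\<integral>x. comp.RIc D e1 e2 (V j) (\<Omega> j) (v j) x \<partial>?M))"
      unfolding R_inner_def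
    proof (rule sum.cong[OF refl])
      fix j assume "j \<in> {..<p}"
      then have j: "j < p" by simp
      interpret comp D e1 e2 "V j" "CV j" "\<Omega> j" p K j \<phi> by (rule loc[OF j])
      show "Re (\<integral>x. (\<Sum>b\<in>Basis. gradR D e1 e2 (\<Omega> j) (v j) b x * cnj (gradR D e1 e2 (\<Omega> j) (v j) b x))
            + of_real (VR e1 e2 V \<Omega> j x) * v j x * cnj (v j x) \<partial>?M) = Re (\<integral>x. RIc (v j) x \<partial>?M)"
        unfolding RIc_def VR_def ..
    qed
    have Rnn: "0 \<le> Re (\<integral>x. comp.RIc D e1 e2 (V j) (\<Omega> j) (v j) x \<partial>?M)" if j: "j < p" for j
    proof -
      interpret comp D e1 e2 "V j" "CV j" "\<Omega> j" p K j \<phi> by (rule loc[OF j])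
      have f: "H10 D (v j)" by (rule vH[OF v j])
      obtain \<epsilon> where \<epsilon>: "\<epsilon> > 0" and ae: "AE x in ?M. V j x - (1 + \<epsilon>) / 4 * (\<Omega> j)\<^sup>2 * ((x \<bullet> e1)\<^sup>2 + (x \<bullet> e2)\<^sup>2) \<ge> 0"
        using A2[OF j] by blast
      have "Re (\<integral>x. RIc (v j) x \<partial>?M) = (\<integral>x. Re (RIc (v j) x) \<partial>?M)"
        by (rule integral_Re[OF RIc_int[OF f], symmetric])
      also have "\<dots> \<ge> 0"
      proof (rule integral_nonneg_AE)
        show "AE x in ?M. 0 \<le> Re (RIc (v j) x)"
          using ae
        proof eventually_elim
          case (elim x)
          have vr: "0 \<le> V j x - (\<Omega> j)\<^sup>2 / 4 * ((x \<bullet> e1)\<^sup>2 + (x \<bullet> e2)\<^sup>2)"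
          proof -
            have "0 \<le> \<epsilon> / 4 * (\<Omega> j)\<^sup>2 * ((x \<bullet> e1)\<^sup>2 + (x \<bullet> e2)\<^sup>2)" using \<epsilon> by simp
            then show ?thesis using elim by (simp add: algebra_simps)
          qed
          have s: "0 \<le> Re (\<Sum>b\<in>Basis. gradR D e1 e2 (\<Omega> j) (v j) b x * cnj (gradR D e1 e2 (\<Omega> j) (v j) b x))"
            by (simp add: Re_sum sum_nonneg)
          have t: "Re (of_real (V j x - (\<Omega> j)\<^sup>2 / 4 * ((x \<bullet> e1)\<^sup>2 + (x \<bullet> e2)\<^sup>2)) * v j x * cnj (v j x)) =
              (V j x - (\<Omega> j)\<^sup>2 / 4 * ((x \<bullet> e1)\<^sup>2 + (x \<bullet> e2)\<^sup>2)) * (cmod (v j x))\<^sup>2"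
            by (simp add: complex_norm_square[symmetric] mult.assoc)
          show ?case unfolding RIc_def using s vr t by simp
        qed
      qed
      finally show ?thesis .
    qed
    have Rinn: "0 \<le> R_inner D e1 e2 p V \<Omega> v v" unfolding Req by (intro sum_nonneg) (use Rnn in auto)
    have "(R_norm D e1 e2 p V \<Omega> v)\<^sup>2 = R_inner D e1 e2 p V \<Omega> v v"
      unfolding R_norm_def using Rinn by simp
    also have "\<dots> \<le> a_form D e1 e2 p V \<Omega> K \<phi> v v"
      unfolding Req aform
    proof (rule sum_mono)
      fix j assume "j \<in> {..<p}"
      then have j: "j < p" by simp
      interpret comp D e1 e2 "V j" "CV j" "\<Omega> j" p K j \<phi> by (rule loc[OF j])
      show "Re (\<integral>x. RIc (v j) x \<partial>?M) \<le> Re (\<integral>x. ?SI j (v j) (v j) x - ?LI j (v j) (v j) x \<partial>?M)"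
        by (rule coerc[OF vH[OF v j]])
    qed
    finally show "a_form D e1 e2 p V \<Omega> K \<phi> v v \<ge> (R_norm D e1 e2 p V \<Omega> v)\<^sup>2" .
  qed
  show ?thesis using P1 P2 P3 P4 by blast
qed


end
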